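(* Let $t \in T$ with $t \geq 10^6$, and suppose $P(t) = 1$. Then $C_3(t) > 5$.
   Context: For positive integers $m, r$, $C_m(r)$ is the minimum odd positive integer $n$ such that there exist vectors $v_1, \ldots, v_n \in \mathbb{Z}^m$ (not necessarily distinct) with $|v_i| = \sqrt{r}$ (Euclidean norm) for every $i$ and $v_1 + \cdots + v_n = \mathbf{0}$; if no such odd $n$ exists, $C_m(r) = 0$. $T$ is the set of positive integers $t \equiv 2 \pmod 4$ whose square-free part has at least one odd prime factor $p$ with $p \equiv 2 \pmod 3$. For a positive integer $z$, $P(z)$ is the number of integer triples $(a,b,c)$ with $0 \leq a \leq b \leq c$ and $a^2 + b^2 + c^2 = z$. *)

theory Defs
  imports "HOL-Computational_Algebra.Computational_Algebra"
begin

definition sqnorm :: "int list \<Rightarrow> int" where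
  "sqnorm v = (\<Sum>x\<leftarrow>v. x ^ 2)"

definition zero_sum_config :: "nat \<Rightarrow> nat \<Rightarrow> nat \<Rightarrow> bool" where
  "zero_sum_config m r n \<longleftrightarrow>
     (\<exists>vs :: nat \<Rightarrow> int list.
        (\<forall>i<n. length (vs i) = m \<and> sqnorm (vs i) = int r) \<and>
        (\<forall>j<m. (\<Sum>i<n. vs i ! j) = 0))"

definition C :: "nat \<Rightarrow> nat \<Rightarrow> nat" where
  "C m r = (if \<exists>n. odd n \<and> zero_sum_config m r n
            then (LEAST n. odd n \<and> zero_sum_config m r n) else 0)"

definition sqfree_part :: "nat \<Rightarrow> nat" where
  "sqfree_part t = (\<Prod>p\<in>prime_factors t. p ^ (multiplicity p t mod 2))"

definition T :: "nat set" where
  "T = {t. t > 0 \<and> t mod 4 = 2 \<and>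
          (\<exists>p::nat. prime p \<and> odd p \<and> p dvd sqfree_part t \<and> p mod 3 = 2)}"

definition P :: "nat \<Rightarrow> nat" where
  "P z = card {(a::nat, b::nat, c::nat). a \<le> b \<and> b \<le> c \<and> a^2 + b^2 + c^2 = z}"

end

theory Submission
  imports Defs "HOL-Number_Theory.Number_Theory"
begin


lemma halve4:
  fixes n x0 x1 x2 x3 :: int
  assumes "2*n = x0^2+x1^2+x2^2+x3^2"
  shows "\<exists>y0 y1 y2 y3. n = y0^2+y1^2+y2^2+y3^2"
proof -
  have ev: "even (x0+x1+x2+x3)"
  proof -
    have "even (x0^2+x1^2+x2^2+x3^2)" using assms by (metis dvd_triv_left)
    then show ?thesis by (simp add: even_add)
  qed
  have key: "\<exists>y0 y1 y2 y3. n = y0^2+y1^2+y2^2+y3^2"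
    if e1: "even (a+b)" and e2: "even (c+d)" and s: "2*n = a^2+b^2+c^2+d^2" for a b c d :: int
  proof -
    obtain k where k: "a+b = 2*k" using e1 by blast
    obtain l where l: "c+d = 2*l" using e2 by blast
    have "n = k^2 + (k-b)^2 + l^2 + (l-d)^2"
    proof -
      have "a = 2*k - b" "c = 2*l - d" using k l by auto
      then have "2*n = (2*k-b)^2 + b^2 + (2*l-d)^2 + d^2" using s by simp
      also have "\<dots> = 2*(k^2 + (k-b)^2 + l^2 + (l-d)^2)" by (simp add: power2_eq_square algebra_simps)
      finally show ?thesis by simp
    qed
    then show ?thesis by blast
  qed
  consider "even (x0+x1) \<and> even (x2+x3)" | "even (x0+x2) \<and> even (x1+x3)" | "even (x0+x3) \<and> even (x1+x2)"
    using ev by (auto simp: even_add)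
  then show ?thesis
  proof cases
    case 1 then show ?thesis using key[of x0 x1 x2 x3] assms by auto
  next
    case 2 then show ?thesis using key[of x0 x2 x1 x3] assms by (auto simp: algebra_simps)
  next
    case 3 then show ?thesis using key[of x0 x3 x1 x2] assms by (auto simp: algebra_simps)
  qed
qed

lemma euler4:
  fixes x0 x1 x2 x3 y0 y1 y2 y3 :: int
  shows "(x0^2+x1^2+x2^2+x3^2)*(y0^2+y1^2+y2^2+y3^2) =
    (x0*y0+x1*y1+x2*y2+x3*y3)^2 + (x0*y1-x1*y0+x2*y3-x3*y2)^2 +
    (x0*y2-x2*y0+x3*y1-x1*y3)^2 + (x0*y3-x3*y0+x1*y2-x2*y1)^2"
  by (simp add: power2_eq_square algebra_simps)

lemma small_dvd_zero:
  fixes p d :: int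
  assumes "p dvd d" "\<bar>d\<bar> < p"
  shows "d = 0"
  using assms dvd_imp_le_int by force

lemma sq_inj_mod:
  fixes p x x' :: int
  assumes "prime p" "0 \<le> x" "x \<le> (p-1) div 2" "0 \<le> x'" "x' \<le> (p-1) div 2"
    and "x^2 mod p = x'^2 mod p"
  shows "x = x'"
proof -
  have "p dvd x^2 - x'^2" using assms(6) by (simp add: mod_eq_dvd_iff)
  then have "p dvd (x - x') * (x + x')" by (simp add: power2_eq_square algebra_simps)
  then have "p dvd (x - x') \<or> p dvd (x + x')" using assms(1) prime_dvd_mult_iff by blast
  moreover have "p > 1" using assms(1) prime_gt_1_int by blast
  moreover have "2 * ((p-1) div 2) \<le> p - 1" by simp
  ultimately show ?thesis using assms small_dvd_zero[of p "x-x'"] small_dvd_zero[of p "x+x'"]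
    by (smt (verit))
qed

lemma sq_plus_one:
  fixes p :: int
  assumes "prime p" "odd p"
  shows "\<exists>x y. 0 \<le> x \<and> x \<le> (p-1) div 2 \<and> 0 \<le> y \<and> y \<le> (p-1) div 2 \<and> p dvd x^2 + y^2 + 1"
proof (rule ccontr)
  assume na: "\<not> ?thesis"
  define h where "h = (p-1) div 2"
  have p1: "p > 1" using assms(1) prime_gt_1_int by blast
  have hp: "2*h + 1 = p" using assms(2) unfolding h_def by (auto elim!: oddE)
  define I where "I = {0..h}"
  define f where "f = (\<lambda>x::int. x^2 mod p)"
  define g where "g = (\<lambda>y::int. (-1 - y^2) mod p)"
  have injf: "inj_on f I"
    unfolding inj_on_def I_def f_def h_def using sq_inj_mod[OF assms(1)] by auto
  have injg: "inj_on g I"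
  proof (rule inj_onI)
    fix x y assume xy: "x \<in> I" "y \<in> I" "g x = g y"
    then have "(-1 - x^2) mod p = (-1 - y^2) mod p" unfolding g_def by simp
    then have "p dvd (-1 - x^2) - (-1 - y^2)" by (simp add: mod_eq_dvd_iff)
    then have "p dvd y^2 - x^2" by simp
    then have "y^2 mod p = x^2 mod p" by (simp add: mod_eq_dvd_iff)
    then show "x = y" using sq_inj_mod[OF assms(1)] xy unfolding I_def h_def by auto
  qed
  have disj: "f ` I \<inter> g ` I = {}"
  proof (rule ccontr)
    assume "f ` I \<inter> g ` I \<noteq> {}"
    then obtain x y where xyI: "x \<in> I" "y \<in> I" and "f x = g y" by auto
    then have "x^2 mod p = (-1 - y^2) mod p" unfolding f_def g_def by simp
    then have "p dvd x^2 - (-1 - y^2)" by (simp add: mod_eq_dvd_iff)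
    then have "p dvd x^2 + y^2 + 1" by (simp add: algebra_simps)
    then show False using na xyI unfolding I_def h_def by auto
  qed
  have sub: "f ` I \<union> g ` I \<subseteq> {0..<p}"
    unfolding f_def g_def using p1 by auto
  have cI: "card I = nat (h+1)" unfolding I_def by simp
  have "card (f ` I \<union> g ` I) = card (f ` I) + card (g ` I)"
    using disj by (simp add: card_Un_disjoint I_def)
  also have "\<dots> = 2 * nat (h+1)" using card_image[OF injf] card_image[OF injg] cI by simp
  finally have "card (f ` I \<union> g ` I) = 2 * nat (h+1)" .
  moreover have "card (f ` I \<union> g ` I) \<le> card {0..<p}" using sub by (intro card_mono) auto
  moreover have "card {0..<p} = nat p" by simp
  ultimately show False using hp p1 by linarith
qed

lemma centered_residue:
  fixes m x :: int
  assumes "m > 0" "odd m"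
  shows "\<exists>y k. x = y + m*k \<and> 2*\<bar>y\<bar> \<le> m - 1"
proof -
  define h where "h = (m-1) div 2"
  have hm: "2*h + 1 = m" using assms(2) unfolding h_def by (auto elim!: oddE)
  define y where "y = (x + h) mod m - h"
  have "(x+h) mod m \<ge> 0" "(x+h) mod m < m" using assms by auto
  then have b: "2*\<bar>y\<bar> \<le> m - 1" unfolding y_def using hm by (simp add: abs_if)
  have "x = y + m * ((x+h) div m)" unfolding y_def
    using mod_div_mult_eq[of "x+h" m] by (simp add: algebra_simps)
  then show ?thesis using b by blast
qed

lemma four_sq_prime:
  fixes p :: int
  assumes pr: "prime p" and od: "odd p"
  shows "\<exists>q0 q1 q2 q3. p = q0^2+q1^2+q2^2+q3^2"
proof -
  define Q where "Q = (\<lambda>m::int. \<exists>x0 x1 x2 x3. m*p = x0^2+x1^2+x2^2+x3^2)"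
  have p1: "p > 1" using pr prime_gt_1_int by blast
  have step: "0 < m \<longrightarrow> m < p \<longrightarrow> Q (int m) \<longrightarrow> Q 1" for m :: nat
  proof (induction m rule: less_induct)
    case (less m)
    show ?case
    proof (intro impI)
      assume m0: "0 < m" and mp: "int m < p" and Qm: "Q (int m)"
      show "Q 1"
      proof (cases "m = 1")
        case True then show ?thesis using Qm by simp
      next
        case False
        then have m2: "m \<ge> 2" using m0 by linarith
        obtain x0 x1 x2 x3 where xs: "int m * p = x0^2+x1^2+x2^2+x3^2" using Qm unfolding Q_def by blast
        show ?thesis
        proof (cases "even m")
          case True
          then obtain m' where m': "m = 2*m'" by blast
          have "2 * (int m' * p) = x0^2+x1^2+x2^2+x3^2" using xs m' by simp
          then have "Q (int m')" using halve4 unfolding Q_def by blast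
          moreover have "m' < m" "0 < m'" "int m' < p" using m' m2 mp by auto
          ultimately show ?thesis using less.IH by blast
        next
          case False
          define M where "M = int m"
          have Mo: "odd M" "M > 0" using False m0 unfolding M_def by auto
          obtain y0 k0 where y0: "x0 = y0 + M*k0" "2*\<bar>y0\<bar> \<le> M - 1" using centered_residue[OF Mo(2) Mo(1)] by blast
          obtain y1 k1 where y1: "x1 = y1 + M*k1" "2*\<bar>y1\<bar> \<le> M - 1" using centered_residue[OF Mo(2) Mo(1)] by blast
          obtain y2 k2 where y2: "x2 = y2 + M*k2" "2*\<bar>y2\<bar> \<le> M - 1" using centered_residue[OF Mo(2) Mo(1)] by blast
          obtain y3 k3 where y3: "x3 = y3 + M*k3" "2*\<bar>y3\<bar> \<le> M - 1" using centered_residue[OF Mo(2) Mo(1)] by blast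
          define S where "S = y0^2+y1^2+y2^2+y3^2"
          have xs': "M * p = x0^2+x1^2+x2^2+x3^2" using xs unfolding M_def .
          have Sx: "M * p = S + M * (2*(y0*k0+y1*k1+y2*k2+y3*k3) + M*(k0^2+k1^2+k2^2+k3^2))"
            unfolding S_def using xs' y0 y1 y2 y3 by (simp add: power2_eq_square algebra_simps)
          have "M dvd S"
          proof -
            have "S = M * (p - (2*(y0*k0+y1*k1+y2*k2+y3*k3) + M*(k0^2+k1^2+k2^2+k3^2)))"
              using Sx by (simp add: algebra_simps)
            then show ?thesis by (metis dvd_triv_left)
          qed
          then obtain r where r: "S = M * r" by blast
          have sq_le: "4 * z^2 \<le> (M-1)^2" if "2*\<bar>z\<bar> \<le> M - 1" for z
          proof -
            have "(2*\<bar>z\<bar>)^2 \<le> (M-1)^2" using that by (intro power_mono) auto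
            then show ?thesis by (simp add: power_mult_distrib)
          qed
          have "4*S \<le> 4*(M-1)^2" unfolding S_def using sq_le[OF y0(2)] sq_le[OF y1(2)] sq_le[OF y2(2)] sq_le[OF y3(2)] by (simp add: algebra_simps)
          then have SM: "S \<le> (M-1)^2" by linarith
          have Snn: "S \<ge> 0" unfolding S_def by simp
          have r0: "r \<ge> 0" using Snn r Mo(2) by (simp add: zero_le_mult_iff)
          have rM: "r < M"
          proof (rule ccontr)
            assume "\<not> r < M"
            then have "M*M \<le> M*r" using Mo(2) by (intro mult_left_mono) auto
            moreover have "(M-1)^2 < M*M" using Mo(2) by (simp add: power2_eq_square algebra_simps)
            ultimately show False using SM r by linarith
          qed
          have rpos: "r > 0"
          proof (rule ccontr)
            assume "\<not> r > 0"
            then have "S = 0" using r r0 by simp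
            then have "y0 = 0 \<and> y1 = 0 \<and> y2 = 0 \<and> y3 = 0" unfolding S_def by (simp add: add_nonneg_eq_0_iff)
            then have "M * p = M * (M * (k0^2+k1^2+k2^2+k3^2))" using xs' y0 y1 y2 y3 by (simp add: power2_eq_square algebra_simps)
            then have "p = M * (k0^2+k1^2+k2^2+k3^2)" using Mo(2) by simp
            then have "M dvd p" by simp
            then have "M = 1 \<or> M = p" using pr Mo(2) unfolding prime_int_iff by auto
            then show False using m2 mp unfolding M_def by auto
          qed
          define w0 where "w0 = r + (k0*y0+k1*y1+k2*y2+k3*y3)"
          define w1 where "w1 = k0*y1 - k1*y0 + k2*y3 - k3*y2"
          define w2 where "w2 = k0*y2 - k2*y0 + k3*y1 - k1*y3"
          define w3 where "w3 = k0*y3 - k3*y0 + k1*y2 - k2*y1"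
          have z0: "x0*y0+x1*y1+x2*y2+x3*y3 = M*w0" unfolding w0_def using y0 y1 y2 y3 r unfolding S_def
            by (simp add: power2_eq_square algebra_simps)
          have z1: "x0*y1-x1*y0+x2*y3-x3*y2 = M*w1" unfolding w1_def using y0 y1 y2 y3
            by (simp add: algebra_simps)
          have z2: "x0*y2-x2*y0+x3*y1-x1*y3 = M*w2" unfolding w2_def using y0 y1 y2 y3
            by (simp add: algebra_simps)
          have z3: "x0*y3-x3*y0+x1*y2-x2*y1 = M*w3" unfolding w3_def using y0 y1 y2 y3
            by (simp add: algebra_simps)
          have "(M*p)*(M*r) = (M*w0)^2 + (M*w1)^2 + (M*w2)^2 + (M*w3)^2"
            using euler4[of x0 x1 x2 x3 y0 y1 y2 y3] xs' r z0 z1 z2 z3 unfolding S_def by simp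
          then have "(M*M)*(r*p) = (M*M)*(w0^2+w1^2+w2^2+w3^2)" by (simp add: power2_eq_square algebra_simps)
          then have "r*p = w0^2+w1^2+w2^2+w3^2" using Mo(2) by simp
          then have Qr: "Q r" unfolding Q_def by blast
          have "nat r < m" "0 < nat r" "int (nat r) < p" using rM rpos mp unfolding M_def by auto
          moreover have "Q (int (nat r))" using Qr r0 by simp
          ultimately show ?thesis using less.IH[of "nat r"] by blast
        qed
      qed
    qed
  qed
  obtain x y where xy: "0 \<le> x" "x \<le> (p-1) div 2" "0 \<le> y" "y \<le> (p-1) div 2" "p dvd x^2 + y^2 + 1"
    using sq_plus_one[OF pr od] by blast
  obtain m0 where m0: "x^2+y^2+1 = p * m0" using xy(5) by blast
  have "2*x \<le> p - 1" "2*y \<le> p - 1" using xy by auto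
  then have "(2*x)^2 \<le> (p-1)^2" "(2*y)^2 \<le> (p-1)^2"
    using power_mono[of "2*x" "p-1" 2] power_mono[of "2*y" "p-1" 2] xy by auto
  then have "4*x^2 \<le> (p-1)^2" "4*y^2 \<le> (p-1)^2" by (simp_all add: power_mult_distrib)
  moreover have pp: "p*p \<ge> 2*p" using p1 mult_right_mono[of 2 p p] by linarith
  moreover have "(p-1)^2 = p*p - 2*p + 1" "p^2 = p*p" by (simp_all add: power2_eq_square algebra_simps)
  ultimately have "4*(x^2+y^2+1) < 4*p^2" using p1 by (smt (verit))
  then have "p*m0 < p*p" using m0 by (simp add: power2_eq_square)
  then have m0p: "m0 < p" using p1 by simp
  have m0pos: "m0 > 0"
  proof -
    have "p*m0 > 0" using m0[symmetric] by (simp add: add_pos_nonneg)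
    then show ?thesis using p1 by (simp add: zero_less_mult_iff)
  qed
  have "int (nat m0) * p = x^2+y^2+1^2+0^2" using m0 m0pos by (simp add: algebra_simps)
  then have "Q (int (nat m0))" unfolding Q_def by blast
  then have "Q 1" using step[of "nat m0"] m0p m0pos by auto
  then show ?thesis unfolding Q_def by auto
qed



lemma bezout3:
  fixes a b c :: int
  shows "\<exists>u v w. u*a + v*b + w*c = gcd a (gcd b c)"
proof -
  obtain u1 v1 where 1: "u1*b + v1*c = gcd b c" using bezout_int by blast
  obtain u v where 2: "u*a + v*gcd b c = gcd a (gcd b c)" using bezout_int by blast
  have "u*a + (v*u1)*b + (v*v1)*c = u*a + v*(u1*b + v1*c)" by (simp add: algebra_simps)
  also have "\<dots> = gcd a (gcd b c)" using 1 2 by simp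
  finally show ?thesis by blast
qed

lemma sq3_scale: "((h::int)*x)^2+(h*y)^2+(h*z)^2 = h^2*(x^2+y^2+z^2)"
  by (simp add: power_mult_distrib algebra_simps)

lemma pd_sq: "prime (p::int) \<Longrightarrow> p dvd q^2 \<Longrightarrow> p dvd q"
  using prime_dvd_mult_iff[of p q q] by (simp add: power2_eq_square)

lemma dvd_diffI: "(p::int) dvd X \<Longrightarrow> p dvd Y \<Longrightarrow> X - Y = Z \<Longrightarrow> p dvd Z"
  using dvd_diff by blast

lemma odd_prime_dvd_2:
  fixes p e :: int
  assumes "prime p" "odd p" "p dvd 2*e"
  shows "p dvd e"
proof -
  have "\<not> p dvd 2"
  proof
    assume "p dvd 2"
    then have "p \<le> 2" by (simp add: zdvd_imp_le)
    moreover have "p > 1" using assms(1) prime_gt_1_int by blast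
    ultimately have "p = 2" by simp
    then show False using assms(2) by simp
  qed
  then show ?thesis using assms prime_dvd_mult_iff by blast
qed

lemma dvd_by_bez:
  fixes p e x0 y0 z0 al be ga :: int
  assumes "prime p" "odd p" "al*x0 + be*y0 + ga*z0 = 1"
    "p dvd 2*x0*e" "p dvd 2*y0*e" "p dvd 2*z0*e"
  shows "p dvd e"
proof -
  have "p dvd al*(2*x0*e) + be*(2*y0*e) + ga*(2*z0*e)" using assms(4-6) by simp
  moreover have "al*(2*x0*e) + be*(2*y0*e) + ga*(2*z0*e) = 2*e*(al*x0 + be*y0 + ga*z0)" by (simp add: algebra_simps)
  ultimately have "p dvd 2*e" using assms(3) by simp
  then show ?thesis using odd_prime_dvd_2 assms(1,2) by blast
qed

lemma rot_norm:
  fixes q0 q1 q2 q3 u1 u2 u3 :: int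
  shows "((q0^2+q1^2-q2^2-q3^2)*u1 + (2*(q1*q2-q0*q3))*u2 + (2*(q1*q3+q0*q2))*u3)^2 + ((2*(q1*q2+q0*q3))*u1 + (q0^2-q1^2+q2^2-q3^2)*u2 + (2*(q2*q3-q0*q1))*u3)^2 + ((2*(q1*q3-q0*q2))*u1 + (2*(q2*q3+q0*q1))*u2 + (q0^2-q1^2-q2^2+q3^2)*u3)^2 = (q0^2+q1^2+q2^2+q3^2)^2 * (u1^2+u2^2+u3^2)"
  by (simp add: power2_eq_square algebra_simps)

lemma no_odd_common_prime:
  fixes a b c p :: int
  assumes H: "\<And>x y z. x^2+y^2+z^2 = a^2+b^2+c^2 \<Longrightarrow> \<bar>x\<bar> \<in> {a,b,c} \<and> \<bar>y\<bar> \<in> {a,b,c} \<and> \<bar>z\<bar> \<in> {a,b,c}"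
    and pr: "prime p" and od: "odd p" and da: "p dvd a" and db: "p dvd b" and dc: "p dvd c"
    and nz: "a^2+b^2+c^2 > 0"
  shows False
proof -
  define g where "g = gcd a (gcd b c)"
  have gnz: "g \<noteq> 0" unfolding g_def using nz by auto
  have gpos: "g > 0" using gnz unfolding g_def by (simp add: le_less)
  have pg: "p dvd g" unfolding g_def using da db dc by simp
  then obtain h where h: "g = p*h" by blast
  have p1: "p > 1" using pr prime_gt_1_int by blast
  have hpos: "h > 0" using gpos h p1 by (simp add: zero_less_mult_iff)
  obtain al be ga where bz: "al*a + be*b + ga*c = g" using bezout3 unfolding g_def by blast
  have "g dvd gcd b c" unfolding g_def by (rule gcd_dvd2)
  moreover have "gcd b c dvd b" "gcd b c dvd c" by simp_all
  ultimately have "g dvd b" "g dvd c" using dvd_trans by blast+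
  moreover have "g dvd a" unfolding g_def by simp
  ultimately have "g dvd a" "g dvd b" "g dvd c" by blast+
  then obtain x0 y0 z0 where xyz: "a = g*x0" "b = g*y0" "c = g*z0" by (metis dvdE)
  have bz1: "al*x0 + be*y0 + ga*z0 = 1"
  proof -
    have "g*(al*x0 + be*y0 + ga*z0) = g*1" using bz xyz by (simp add: algebra_simps)
    then show ?thesis using gnz by simp
  qed
  obtain q0 q1 q2 q3 where q: "p = q0^2+q1^2+q2^2+q3^2" using four_sq_prime[OF pr od] by blast
  have gdv: "g dvd w" if "\<bar>w\<bar> \<in> {a,b,c}" for w
  proof -
    have "g dvd \<bar>w\<bar>" using that \<open>g dvd a\<close> \<open>g dvd b\<close> \<open>g dvd c\<close> by auto
    then show ?thesis by simp
  qed
  have D: "p dvd ((q0^2+q1^2-q2^2-q3^2)*u1 + (2*(q1*q2-q0*q3))*u2 + (2*(q1*q3+q0*q2))*u3) \<and> p dvd ((2*(q1*q2+q0*q3))*u1 + (q0^2-q1^2+q2^2-q3^2)*u2 + (2*(q2*q3-q0*q1))*u3) \<and> p dvd ((2*(q1*q3-q0*q2))*u1 + (2*(q2*q3+q0*q1))*u2 + (q0^2-q1^2-q2^2+q3^2)*u3)"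
    if un: "u1^2+u2^2+u3^2 = x0^2+y0^2+z0^2" for u1 u2 u3
  proof -
    have "(h*((q0^2+q1^2-q2^2-q3^2)*u1 + (2*(q1*q2-q0*q3))*u2 + (2*(q1*q3+q0*q2))*u3))^2 + (h*((2*(q1*q2+q0*q3))*u1 + (q0^2-q1^2+q2^2-q3^2)*u2 + (2*(q2*q3-q0*q1))*u3))^2 + (h*((2*(q1*q3-q0*q2))*u1 + (2*(q2*q3+q0*q1))*u2 + (q0^2-q1^2-q2^2+q3^2)*u3))^2 = h^2*(((q0^2+q1^2-q2^2-q3^2)*u1 + (2*(q1*q2-q0*q3))*u2 + (2*(q1*q3+q0*q2))*u3)^2 + ((2*(q1*q2+q0*q3))*u1 + (q0^2-q1^2+q2^2-q3^2)*u2 + (2*(q2*q3-q0*q1))*u3)^2 + ((2*(q1*q3-q0*q2))*u1 + (2*(q2*q3+q0*q1))*u2 + (q0^2-q1^2-q2^2+q3^2)*u3)^2)"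
      by (rule sq3_scale)
    also have "\<dots> = h^2*(p^2*(u1^2+u2^2+u3^2))" using rot_norm[of q0 q1 q2 q3 u1 u2 u3] q by simp
    also have "\<dots> = (h*p)^2*(x0^2+y0^2+z0^2)" using un by (simp add: power_mult_distrib)
    also have "\<dots> = a^2+b^2+c^2" using xyz h by (simp add: power_mult_distrib algebra_simps)
    finally have "\<bar>h*((q0^2+q1^2-q2^2-q3^2)*u1 + (2*(q1*q2-q0*q3))*u2 + (2*(q1*q3+q0*q2))*u3)\<bar> \<in> {a,b,c} \<and> \<bar>h*((2*(q1*q2+q0*q3))*u1 + (q0^2-q1^2+q2^2-q3^2)*u2 + (2*(q2*q3-q0*q1))*u3)\<bar> \<in> {a,b,c} \<and> \<bar>h*((2*(q1*q3-q0*q2))*u1 + (2*(q2*q3+q0*q1))*u2 + (q0^2-q1^2-q2^2+q3^2)*u3)\<bar> \<in> {a,b,c}" using H by blast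
    then have "g dvd h*((q0^2+q1^2-q2^2-q3^2)*u1 + (2*(q1*q2-q0*q3))*u2 + (2*(q1*q3+q0*q2))*u3)" "g dvd h*((2*(q1*q2+q0*q3))*u1 + (q0^2-q1^2+q2^2-q3^2)*u2 + (2*(q2*q3-q0*q1))*u3)" "g dvd h*((2*(q1*q3-q0*q2))*u1 + (2*(q2*q3+q0*q1))*u2 + (q0^2-q1^2-q2^2+q3^2)*u3)" using gdv by blast+
    then have "p*h dvd h*((q0^2+q1^2-q2^2-q3^2)*u1 + (2*(q1*q2-q0*q3))*u2 + (2*(q1*q3+q0*q2))*u3)" "p*h dvd h*((2*(q1*q2+q0*q3))*u1 + (q0^2-q1^2+q2^2-q3^2)*u2 + (2*(q2*q3-q0*q1))*u3)" "p*h dvd h*((2*(q1*q3-q0*q2))*u1 + (2*(q2*q3+q0*q1))*u2 + (q0^2-q1^2-q2^2+q3^2)*u3)" using h by simp_all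
    then show ?thesis using hpos by (simp add: mult.commute)
  qed
  have n1: "x0^2+y0^2+z0^2 = x0^2+y0^2+z0^2" "(-x0)^2+y0^2+z0^2 = x0^2+y0^2+z0^2" by (simp_all add: algebra_simps)
  have f1_1_x0: "p dvd 2*x0*(q0^2+q1^2-q2^2-q3^2)"
    using dvd_diffI[OF conjunct1[OF D[OF n1(1)]] conjunct1[OF D[OF n1(2)]]] dvd_diffI[OF conjunct1[OF conjunct2[OF D[OF n1(1)]]] conjunct1[OF conjunct2[OF D[OF n1(2)]]]] dvd_diffI[OF conjunct2[OF conjunct2[OF D[OF n1(1)]]] conjunct2[OF conjunct2[OF D[OF n1(2)]]]]
    by (simp add: algebra_simps)
  have f2_1_x0: "p dvd 2*x0*(2*(q1*q2+q0*q3))"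
    using dvd_diffI[OF conjunct1[OF D[OF n1(1)]] conjunct1[OF D[OF n1(2)]]] dvd_diffI[OF conjunct1[OF conjunct2[OF D[OF n1(1)]]] conjunct1[OF conjunct2[OF D[OF n1(2)]]]] dvd_diffI[OF conjunct2[OF conjunct2[OF D[OF n1(1)]]] conjunct2[OF conjunct2[OF D[OF n1(2)]]]]
    by (simp add: algebra_simps)
  have f3_1_x0: "p dvd 2*x0*(2*(q1*q3-q0*q2))"
    using dvd_diffI[OF conjunct1[OF D[OF n1(1)]] conjunct1[OF D[OF n1(2)]]] dvd_diffI[OF conjunct1[OF conjunct2[OF D[OF n1(1)]]] conjunct1[OF conjunct2[OF D[OF n1(2)]]]] dvd_diffI[OF conjunct2[OF conjunct2[OF D[OF n1(1)]]] conjunct2[OF conjunct2[OF D[OF n1(2)]]]]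
    by (simp add: algebra_simps)
  have n2: "y0^2+x0^2+z0^2 = x0^2+y0^2+z0^2" "(-y0)^2+x0^2+z0^2 = x0^2+y0^2+z0^2" by (simp_all add: algebra_simps)
  have f1_1_y0: "p dvd 2*y0*(q0^2+q1^2-q2^2-q3^2)"
    using dvd_diffI[OF conjunct1[OF D[OF n2(1)]] conjunct1[OF D[OF n2(2)]]] dvd_diffI[OF conjunct1[OF conjunct2[OF D[OF n2(1)]]] conjunct1[OF conjunct2[OF D[OF n2(2)]]]] dvd_diffI[OF conjunct2[OF conjunct2[OF D[OF n2(1)]]] conjunct2[OF conjunct2[OF D[OF n2(2)]]]]
    by (simp add: algebra_simps)
  have f2_1_y0: "p dvd 2*y0*(2*(q1*q2+q0*q3))"
    using dvd_diffI[OF conjunct1[OF D[OF n2(1)]] conjunct1[OF D[OF n2(2)]]] dvd_diffI[OF conjunct1[OF conjunct2[OF D[OF n2(1)]]] conjunct1[OF conjunct2[OF D[OF n2(2)]]]] dvd_diffI[OF conjunct2[OF conjunct2[OF D[OF n2(1)]]] conjunct2[OF conjunct2[OF D[OF n2(2)]]]]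
    by (simp add: algebra_simps)
  have f3_1_y0: "p dvd 2*y0*(2*(q1*q3-q0*q2))"
    using dvd_diffI[OF conjunct1[OF D[OF n2(1)]] conjunct1[OF D[OF n2(2)]]] dvd_diffI[OF conjunct1[OF conjunct2[OF D[OF n2(1)]]] conjunct1[OF conjunct2[OF D[OF n2(2)]]]] dvd_diffI[OF conjunct2[OF conjunct2[OF D[OF n2(1)]]] conjunct2[OF conjunct2[OF D[OF n2(2)]]]]
    by (simp add: algebra_simps)
  have n3: "z0^2+x0^2+y0^2 = x0^2+y0^2+z0^2" "(-z0)^2+x0^2+y0^2 = x0^2+y0^2+z0^2" by (simp_all add: algebra_simps)
  have f1_1_z0: "p dvd 2*z0*(q0^2+q1^2-q2^2-q3^2)"
    using dvd_diffI[OF conjunct1[OF D[OF n3(1)]] conjunct1[OF D[OF n3(2)]]] dvd_diffI[OF conjunct1[OF conjunct2[OF D[OF n3(1)]]] conjunct1[OF conjunct2[OF D[OF n3(2)]]]] dvd_diffI[OF conjunct2[OF conjunct2[OF D[OF n3(1)]]] conjunct2[OF conjunct2[OF D[OF n3(2)]]]]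
    by (simp add: algebra_simps)
  have f2_1_z0: "p dvd 2*z0*(2*(q1*q2+q0*q3))"
    using dvd_diffI[OF conjunct1[OF D[OF n3(1)]] conjunct1[OF D[OF n3(2)]]] dvd_diffI[OF conjunct1[OF conjunct2[OF D[OF n3(1)]]] conjunct1[OF conjunct2[OF D[OF n3(2)]]]] dvd_diffI[OF conjunct2[OF conjunct2[OF D[OF n3(1)]]] conjunct2[OF conjunct2[OF D[OF n3(2)]]]]
    by (simp add: algebra_simps)
  have f3_1_z0: "p dvd 2*z0*(2*(q1*q3-q0*q2))"
    using dvd_diffI[OF conjunct1[OF D[OF n3(1)]] conjunct1[OF D[OF n3(2)]]] dvd_diffI[OF conjunct1[OF conjunct2[OF D[OF n3(1)]]] conjunct1[OF conjunct2[OF D[OF n3(2)]]]] dvd_diffI[OF conjunct2[OF conjunct2[OF D[OF n3(1)]]] conjunct2[OF conjunct2[OF D[OF n3(2)]]]]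
    by (simp add: algebra_simps)
  have n4: "y0^2+x0^2+z0^2 = x0^2+y0^2+z0^2" "y0^2+(-x0)^2+z0^2 = x0^2+y0^2+z0^2" by (simp_all add: algebra_simps)
  have f1_2_x0: "p dvd 2*x0*(2*(q1*q2-q0*q3))"
    using dvd_diffI[OF conjunct1[OF D[OF n4(1)]] conjunct1[OF D[OF n4(2)]]] dvd_diffI[OF conjunct1[OF conjunct2[OF D[OF n4(1)]]] conjunct1[OF conjunct2[OF D[OF n4(2)]]]] dvd_diffI[OF conjunct2[OF conjunct2[OF D[OF n4(1)]]] conjunct2[OF conjunct2[OF D[OF n4(2)]]]]
    by (simp add: algebra_simps)
  have f2_2_x0: "p dvd 2*x0*(q0^2-q1^2+q2^2-q3^2)"
    using dvd_diffI[OF conjunct1[OF D[OF n4(1)]] conjunct1[OF D[OF n4(2)]]] dvd_diffI[OF conjunct1[OF conjunct2[OF D[OF n4(1)]]] conjunct1[OF conjunct2[OF D[OF n4(2)]]]] dvd_diffI[OF conjunct2[OF conjunct2[OF D[OF n4(1)]]] conjunct2[OF conjunct2[OF D[OF n4(2)]]]]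
    by (simp add: algebra_simps)
  have f3_2_x0: "p dvd 2*x0*(2*(q2*q3+q0*q1))"
    using dvd_diffI[OF conjunct1[OF D[OF n4(1)]] conjunct1[OF D[OF n4(2)]]] dvd_diffI[OF conjunct1[OF conjunct2[OF D[OF n4(1)]]] conjunct1[OF conjunct2[OF D[OF n4(2)]]]] dvd_diffI[OF conjunct2[OF conjunct2[OF D[OF n4(1)]]] conjunct2[OF conjunct2[OF D[OF n4(2)]]]]
    by (simp add: algebra_simps)
  have n5: "x0^2+y0^2+z0^2 = x0^2+y0^2+z0^2" "x0^2+(-y0)^2+z0^2 = x0^2+y0^2+z0^2" by (simp_all add: algebra_simps)
  have f1_2_y0: "p dvd 2*y0*(2*(q1*q2-q0*q3))"
    using dvd_diffI[OF conjunct1[OF D[OF n5(1)]] conjunct1[OF D[OF n5(2)]]] dvd_diffI[OF conjunct1[OF conjunct2[OF D[OF n5(1)]]] conjunct1[OF conjunct2[OF D[OF n5(2)]]]] dvd_diffI[OF conjunct2[OF conjunct2[OF D[OF n5(1)]]] conjunct2[OF conjunct2[OF D[OF n5(2)]]]]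
    by (simp add: algebra_simps)
  have f2_2_y0: "p dvd 2*y0*(q0^2-q1^2+q2^2-q3^2)"
    using dvd_diffI[OF conjunct1[OF D[OF n5(1)]] conjunct1[OF D[OF n5(2)]]] dvd_diffI[OF conjunct1[OF conjunct2[OF D[OF n5(1)]]] conjunct1[OF conjunct2[OF D[OF n5(2)]]]] dvd_diffI[OF conjunct2[OF conjunct2[OF D[OF n5(1)]]] conjunct2[OF conjunct2[OF D[OF n5(2)]]]]
    by (simp add: algebra_simps)
  have f3_2_y0: "p dvd 2*y0*(2*(q2*q3+q0*q1))"
    using dvd_diffI[OF conjunct1[OF D[OF n5(1)]] conjunct1[OF D[OF n5(2)]]] dvd_diffI[OF conjunct1[OF conjunct2[OF D[OF n5(1)]]] conjunct1[OF conjunct2[OF D[OF n5(2)]]]] dvd_diffI[OF conjunct2[OF conjunct2[OF D[OF n5(1)]]] conjunct2[OF conjunct2[OF D[OF n5(2)]]]]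
    by (simp add: algebra_simps)
  have n6: "x0^2+z0^2+y0^2 = x0^2+y0^2+z0^2" "x0^2+(-z0)^2+y0^2 = x0^2+y0^2+z0^2" by (simp_all add: algebra_simps)
  have f1_2_z0: "p dvd 2*z0*(2*(q1*q2-q0*q3))"
    using dvd_diffI[OF conjunct1[OF D[OF n6(1)]] conjunct1[OF D[OF n6(2)]]] dvd_diffI[OF conjunct1[OF conjunct2[OF D[OF n6(1)]]] conjunct1[OF conjunct2[OF D[OF n6(2)]]]] dvd_diffI[OF conjunct2[OF conjunct2[OF D[OF n6(1)]]] conjunct2[OF conjunct2[OF D[OF n6(2)]]]]
    by (simp add: algebra_simps)
  have f2_2_z0: "p dvd 2*z0*(q0^2-q1^2+q2^2-q3^2)"
    using dvd_diffI[OF conjunct1[OF D[OF n6(1)]] conjunct1[OF D[OF n6(2)]]] dvd_diffI[OF conjunct1[OF conjunct2[OF D[OF n6(1)]]] conjunct1[OF conjunct2[OF D[OF n6(2)]]]] dvd_diffI[OF conjunct2[OF conjunct2[OF D[OF n6(1)]]] conjunct2[OF conjunct2[OF D[OF n6(2)]]]]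
    by (simp add: algebra_simps)
  have f3_2_z0: "p dvd 2*z0*(2*(q2*q3+q0*q1))"
    using dvd_diffI[OF conjunct1[OF D[OF n6(1)]] conjunct1[OF D[OF n6(2)]]] dvd_diffI[OF conjunct1[OF conjunct2[OF D[OF n6(1)]]] conjunct1[OF conjunct2[OF D[OF n6(2)]]]] dvd_diffI[OF conjunct2[OF conjunct2[OF D[OF n6(1)]]] conjunct2[OF conjunct2[OF D[OF n6(2)]]]]
    by (simp add: algebra_simps)
  have n7: "y0^2+z0^2+x0^2 = x0^2+y0^2+z0^2" "y0^2+z0^2+(-x0)^2 = x0^2+y0^2+z0^2" by (simp_all add: algebra_simps)
  have f1_3_x0: "p dvd 2*x0*(2*(q1*q3+q0*q2))"
    using dvd_diffI[OF conjunct1[OF D[OF n7(1)]] conjunct1[OF D[OF n7(2)]]] dvd_diffI[OF conjunct1[OF conjunct2[OF D[OF n7(1)]]] conjunct1[OF conjunct2[OF D[OF n7(2)]]]] dvd_diffI[OF conjunct2[OF conjunct2[OF D[OF n7(1)]]] conjunct2[OF conjunct2[OF D[OF n7(2)]]]]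
    by (simp add: algebra_simps)
  have f2_3_x0: "p dvd 2*x0*(2*(q2*q3-q0*q1))"
    using dvd_diffI[OF conjunct1[OF D[OF n7(1)]] conjunct1[OF D[OF n7(2)]]] dvd_diffI[OF conjunct1[OF conjunct2[OF D[OF n7(1)]]] conjunct1[OF conjunct2[OF D[OF n7(2)]]]] dvd_diffI[OF conjunct2[OF conjunct2[OF D[OF n7(1)]]] conjunct2[OF conjunct2[OF D[OF n7(2)]]]]
    by (simp add: algebra_simps)
  have f3_3_x0: "p dvd 2*x0*(q0^2-q1^2-q2^2+q3^2)"
    using dvd_diffI[OF conjunct1[OF D[OF n7(1)]] conjunct1[OF D[OF n7(2)]]] dvd_diffI[OF conjunct1[OF conjunct2[OF D[OF n7(1)]]] conjunct1[OF conjunct2[OF D[OF n7(2)]]]] dvd_diffI[OF conjunct2[OF conjunct2[OF D[OF n7(1)]]] conjunct2[OF conjunct2[OF D[OF n7(2)]]]]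
    by (simp add: algebra_simps)
  have n8: "x0^2+z0^2+y0^2 = x0^2+y0^2+z0^2" "x0^2+z0^2+(-y0)^2 = x0^2+y0^2+z0^2" by (simp_all add: algebra_simps)
  have f1_3_y0: "p dvd 2*y0*(2*(q1*q3+q0*q2))"
    using dvd_diffI[OF conjunct1[OF D[OF n8(1)]] conjunct1[OF D[OF n8(2)]]] dvd_diffI[OF conjunct1[OF conjunct2[OF D[OF n8(1)]]] conjunct1[OF conjunct2[OF D[OF n8(2)]]]] dvd_diffI[OF conjunct2[OF conjunct2[OF D[OF n8(1)]]] conjunct2[OF conjunct2[OF D[OF n8(2)]]]]
    by (simp add: algebra_simps)
  have f2_3_y0: "p dvd 2*y0*(2*(q2*q3-q0*q1))"
    using dvd_diffI[OF conjunct1[OF D[OF n8(1)]] conjunct1[OF D[OF n8(2)]]] dvd_diffI[OF conjunct1[OF conjunct2[OF D[OF n8(1)]]] conjunct1[OF conjunct2[OF D[OF n8(2)]]]] dvd_diffI[OF conjunct2[OF conjunct2[OF D[OF n8(1)]]] conjunct2[OF conjunct2[OF D[OF n8(2)]]]]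
    by (simp add: algebra_simps)
  have f3_3_y0: "p dvd 2*y0*(q0^2-q1^2-q2^2+q3^2)"
    using dvd_diffI[OF conjunct1[OF D[OF n8(1)]] conjunct1[OF D[OF n8(2)]]] dvd_diffI[OF conjunct1[OF conjunct2[OF D[OF n8(1)]]] conjunct1[OF conjunct2[OF D[OF n8(2)]]]] dvd_diffI[OF conjunct2[OF conjunct2[OF D[OF n8(1)]]] conjunct2[OF conjunct2[OF D[OF n8(2)]]]]
    by (simp add: algebra_simps)
  have n9: "x0^2+y0^2+z0^2 = x0^2+y0^2+z0^2" "x0^2+y0^2+(-z0)^2 = x0^2+y0^2+z0^2" by (simp_all add: algebra_simps)
  have f1_3_z0: "p dvd 2*z0*(2*(q1*q3+q0*q2))"
    using dvd_diffI[OF conjunct1[OF D[OF n9(1)]] conjunct1[OF D[OF n9(2)]]] dvd_diffI[OF conjunct1[OF conjunct2[OF D[OF n9(1)]]] conjunct1[OF conjunct2[OF D[OF n9(2)]]]] dvd_diffI[OF conjunct2[OF conjunct2[OF D[OF n9(1)]]] conjunct2[OF conjunct2[OF D[OF n9(2)]]]]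
    by (simp add: algebra_simps)
  have f2_3_z0: "p dvd 2*z0*(2*(q2*q3-q0*q1))"
    using dvd_diffI[OF conjunct1[OF D[OF n9(1)]] conjunct1[OF D[OF n9(2)]]] dvd_diffI[OF conjunct1[OF conjunct2[OF D[OF n9(1)]]] conjunct1[OF conjunct2[OF D[OF n9(2)]]]] dvd_diffI[OF conjunct2[OF conjunct2[OF D[OF n9(1)]]] conjunct2[OF conjunct2[OF D[OF n9(2)]]]]
    by (simp add: algebra_simps)
  have f3_3_z0: "p dvd 2*z0*(q0^2-q1^2-q2^2+q3^2)"
    using dvd_diffI[OF conjunct1[OF D[OF n9(1)]] conjunct1[OF D[OF n9(2)]]] dvd_diffI[OF conjunct1[OF conjunct2[OF D[OF n9(1)]]] conjunct1[OF conjunct2[OF D[OF n9(2)]]]] dvd_diffI[OF conjunct2[OF conjunct2[OF D[OF n9(1)]]] conjunct2[OF conjunct2[OF D[OF n9(2)]]]]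
    by (simp add: algebra_simps)
  have e11: "p dvd (q0^2+q1^2-q2^2-q3^2)" using dvd_by_bez[OF pr od bz1 f1_1_x0 f1_1_y0 f1_1_z0] .
  have e12: "p dvd (2*(q1*q2-q0*q3))" using dvd_by_bez[OF pr od bz1 f1_2_x0 f1_2_y0 f1_2_z0] .
  have e13: "p dvd (2*(q1*q3+q0*q2))" using dvd_by_bez[OF pr od bz1 f1_3_x0 f1_3_y0 f1_3_z0] .
  have e21: "p dvd (2*(q1*q2+q0*q3))" using dvd_by_bez[OF pr od bz1 f2_1_x0 f2_1_y0 f2_1_z0] .
  have e22: "p dvd (q0^2-q1^2+q2^2-q3^2)" using dvd_by_bez[OF pr od bz1 f2_2_x0 f2_2_y0 f2_2_z0] .
  have e23: "p dvd (2*(q2*q3-q0*q1))" using dvd_by_bez[OF pr od bz1 f2_3_x0 f2_3_y0 f2_3_z0] .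
  have e31: "p dvd (2*(q1*q3-q0*q2))" using dvd_by_bez[OF pr od bz1 f3_1_x0 f3_1_y0 f3_1_z0] .
  have e32: "p dvd (2*(q2*q3+q0*q1))" using dvd_by_bez[OF pr od bz1 f3_2_x0 f3_2_y0 f3_2_z0] .
  have e33: "p dvd (q0^2-q1^2-q2^2+q3^2)" using dvd_by_bez[OF pr od bz1 f3_3_x0 f3_3_y0 f3_3_z0] .

  have pq: "p dvd q0 \<and> p dvd q1 \<and> p dvd q2 \<and> p dvd q3"
  proof -
    have "p dvd 4*(q0*q3)" using dvd_diff[OF e21 e12] by (simp add: algebra_simps)
    have "p dvd 4*(q0*q2)" using dvd_diff[OF e13 e31] by (simp add: algebra_simps)
    have "p dvd 4*(q0*q1)" using dvd_diff[OF e32 e23] by (simp add: algebra_simps)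
    have "p dvd 2*(q0^2 - q3^2)" using dvd_add[OF e11 e22] by (simp add: algebra_simps)
    have "p dvd 2*(q0^2 - q2^2)" using dvd_add[OF e11 e33] by (simp add: algebra_simps)
    have "p dvd 2*(q0^2 - q1^2)" using dvd_add[OF e22 e33] by (simp add: algebra_simps)
    have nd4: "\<not> p dvd 4"
    proof
      assume "p dvd 4"
      moreover have "(4::int) = 2*2" by simp
      ultimately have "p dvd 2" using pr prime_dvd_mult_iff by metis
      then show False using odd_prime_dvd_2[OF pr od, of 1] p1 zdvd_imp_le[of p 2] od by auto
    qed
    have A: "p dvd q0*q3" "p dvd q0*q2" "p dvd q0*q1"
      using \<open>p dvd 4*(q0*q3)\<close> \<open>p dvd 4*(q0*q2)\<close> \<open>p dvd 4*(q0*q1)\<close> nd4 pr prime_dvd_mult_iff by blast+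
    have B: "p dvd q0^2 - q3^2" "p dvd q0^2 - q2^2" "p dvd q0^2 - q1^2"
      using \<open>p dvd 2*(q0^2 - q3^2)\<close> \<open>p dvd 2*(q0^2 - q2^2)\<close> \<open>p dvd 2*(q0^2 - q1^2)\<close> odd_prime_dvd_2[OF pr od] by blast+
    show ?thesis
    proof (cases "p dvd q0")
      case True
      then have "p dvd q0^2" by (simp add: power2_eq_square)
      have "p dvd q0^2 - (q0^2 - q3^2)" "p dvd q0^2 - (q0^2 - q2^2)" "p dvd q0^2 - (q0^2 - q1^2)"
        using dvd_diff[OF \<open>p dvd q0^2\<close> B(1)] dvd_diff[OF \<open>p dvd q0^2\<close> B(2)] dvd_diff[OF \<open>p dvd q0^2\<close> B(3)] by blast+
      then have "p dvd q1^2" "p dvd q2^2" "p dvd q3^2" by simp_all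
      then show ?thesis using True pd_sq[OF pr] by blast
    next
      case False
      then have "p dvd q1" "p dvd q2" "p dvd q3" using A pr prime_dvd_mult_iff by blast+
      then have "p dvd q1^2" by (simp add: power2_eq_square)
      then have "p dvd (q0^2 - q1^2) + q1^2" using dvd_add[OF B(3)] by blast
      then have "p dvd q0^2" by simp
      then have "p dvd q0" using pd_sq[OF pr] by blast
      then show ?thesis using False by blast
    qed
  qed
  then obtain r0 r1 r2 r3 where "q0 = p*r0" "q1 = p*r1" "q2 = p*r2" "q3 = p*r3" unfolding dvd_def by blast
  then have "q0^2+q1^2+q2^2+q3^2 = p*(p*(r0^2+r1^2+r2^2+r3^2))" by (simp add: power2_eq_square algebra_simps)
  then have "p*1 = p*(p*(r0^2+r1^2+r2^2+r3^2))" using q by simp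
  then have "1 = p*(r0^2+r1^2+r2^2+r3^2)" using p1 by simp
  then have "p dvd 1" by (rule dvdI)
  then show False using p1 by (simp add: zdvd_imp_le)
qed



lemma fermat_int:
  fixes p :: nat and x :: int
  assumes "prime p" "\<not> int p dvd x"
  shows "[x^(p-1) = 1] (mod int p)"
proof -
  define X where "X = nat (x mod int p)"
  have p0: "int p > 0" using assms(1) prime_gt_0_nat by simp
  have X: "int X = x mod int p" unfolding X_def using p0 by simp
  have "\<not> p dvd X"
  proof
    assume "p dvd X"
    then have "int p dvd int X" by simp
    then have "int p dvd x mod int p" using X by simp
    then show False using assms(2) by (simp add: dvd_mod_iff)
  qed
  then have "[X^(p-1) = 1] (mod p)" using fermat_theorem[OF assms(1)] by blast
  then have "[int X^(p-1) = 1] (mod int p)" by (metis cong_int_iff of_nat_1 of_nat_power)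
  moreover have "[x = int X] (mod int p)" using X by (simp add: cong_def)
  then have "[x^(p-1) = int X^(p-1)] (mod int p)" by (rule cong_pow)
  ultimately show ?thesis using cong_trans by blast
qed

lemma eis_dvd:
  fixes p :: nat and x y :: int
  assumes pr: "prime p" and p3: "p mod 3 = 2" and d: "int p dvd x^2+x*y+y^2"
  shows "int p dvd y"
proof (rule ccontr)
  assume ny: "\<not> int p dvd y"
  define P where "P = int p"
  have prP: "prime P" unfolding P_def using pr by simp
  have nx: "\<not> P dvd x"
  proof
    assume "P dvd x"
    then have "P dvd x^2 + x*y" by (simp add: power2_eq_square)
    then have "P dvd (x^2+x*y+y^2) - (x^2 + x*y)" using d unfolding P_def by (rule dvd_diff[rotated])
    then have "P dvd y^2" by simp
    then have "P dvd y" using prP prime_dvd_power by blast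
    then show False using ny unfolding P_def by simp
  qed
  have cube: "[x^3 = y^3] (mod P)"
  proof -
    have "x^3 - y^3 = (x - y)*(x^2+x*y+y^2)" by (simp add: power2_eq_square power3_eq_cube algebra_simps)
    then have "P dvd x^3 - y^3" using d unfolding P_def by simp
    then show ?thesis by (simp add: cong_iff_dvd_diff)
  qed
  have p2: "p \<ge> 2" using pr prime_ge_2_nat by blast
  define q where "q = (p - 2) div 3"
  have pq: "p - 1 = 3*q + 1" unfolding q_def using p2 p3 by presburger
  have fx: "[x^(p-1) = 1] (mod P)" using fermat_int[OF pr] nx unfolding P_def by blast
  have fy: "[y^(p-1) = 1] (mod P)" using fermat_int[OF pr] ny unfolding P_def by blast
  have ex: "x^(p-1) = (x^3)^q * x" "y^(p-1) = (y^3)^q * y" unfolding pq by (simp_all add: power_mult[symmetric] power_add)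
  have "[(x^3)^q = (y^3)^q] (mod P)" using cube by (rule cong_pow)
  then have "[(x^3)^q * x = (y^3)^q * x] (mod P)" by (rule cong_mult) (rule cong_refl)
  then have "[(y^3)^q * x = 1] (mod P)" using fx ex(1) by (metis cong_sym cong_trans)
  moreover have "[(y^3)^q * y = 1] (mod P)" using fy ex(2) by simp
  ultimately have "[(y^3)^q * x = (y^3)^q * y] (mod P)" by (metis cong_sym cong_trans)
  then have "P dvd (y^3)^q * x - (y^3)^q * y" by (simp add: cong_iff_dvd_diff)
  then have "P dvd (y^3)^q * (x - y)" by (simp add: algebra_simps)
  then have "P dvd (y^3)^q \<or> P dvd x - y" using prP prime_dvd_mult_iff by blast
  moreover have "\<not> P dvd (y^3)^q"
  proof
    assume "P dvd (y^3)^q"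
    then have "P dvd y^3" using prP prime_dvd_power by blast
    then have "P dvd y" using prP prime_dvd_power by blast
    then show False using ny unfolding P_def by simp
  qed
  ultimately have "P dvd x - y" by blast
  then obtain k where k: "x = y + P*k" by (metis add.commute diff_add_cancel dvdE)
  have "x^2+x*y+y^2 = 3*y^2 + P*(3*k*y + P*k^2)" unfolding k by (simp add: power2_eq_square algebra_simps)
  then have "P dvd 3*y^2" using d unfolding P_def
    by (metis dvd_add_left_iff dvd_triv_left)
  then have "P dvd 3 \<or> P dvd y^2" using prP prime_dvd_mult_iff by blast
  moreover have "\<not> P dvd y^2" using ny prP prime_dvd_power unfolding P_def by blast
  ultimately have "P dvd 3" by blast
  then have "p dvd 3" unfolding P_def by presburger
  moreover from this have "p \<le> 3" by (simp add: dvd_imp_le)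
  moreover have "p = 2 \<or> p = 3" using \<open>p \<le> 3\<close> p2 by linarith
  ultimately show False using p3 by auto
qed

lemma eis_nonneg: "(x::int)^2 + x*y + y^2 \<ge> 0"
proof -
  have "2*(x^2 + x*y + y^2) = x^2 + y^2 + (x+y)^2" by (simp add: power2_eq_square algebra_simps)
  moreover have "x^2 + y^2 + (x+y)^2 \<ge> 0" by simp
  ultimately show ?thesis by (smt (verit))
qed

lemma eis_mult_even:
  fixes p :: nat
  assumes pr: "prime p" and p3: "p mod 3 = 2"
  shows "int m = x^2+x*y+y^2 \<Longrightarrow> even (multiplicity p m)"
proof (induction m arbitrary: x y rule: less_induct)
  case (less m)
  show ?case
  proof (cases "p dvd m")
    case False
    then show ?thesis by (simp add: not_dvd_imp_multiplicity_0)
  next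
    case True
    show ?thesis
    proof (cases "m = 0")
      case True then show ?thesis by simp
    next
      case mnz: False
      have "int p dvd int m" using True by simp
      then have d: "int p dvd x^2+x*y+y^2" using less.prems by simp
      have dy: "int p dvd y" using eis_dvd[OF pr p3 d] .
      have "int p dvd (x^2+x*y+y^2) - (x*y + y^2)" using d dy by (intro dvd_diff) (auto simp: power2_eq_square)
      then have "int p dvd x^2" by simp
      then have dx: "int p dvd x" using pr prime_dvd_power[of "int p" x 2] by simp
      obtain x' where x': "x = int p * x'" using dx by blast
      obtain y' where y': "y = int p * y'" using dy by blast
      define m' where "m' = nat (x'^2+x'*y'+y'^2)"
      have m'i: "int m' = x'^2+x'*y'+y'^2" unfolding m'_def using eis_nonneg by simp
      have "int m = int p * (int p * int m')" using less.prems x' y' m'i by (simp add: power2_eq_square algebra_simps)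
      then have "int m = int (p * (p * m'))" by simp
      then have mm: "m = p * (p * m')" by (simp only: of_nat_eq_iff)
      have p2: "p \<ge> 2" using pr prime_ge_2_nat by blast
      have m'nz: "m' \<noteq> 0" using mm mnz by auto
      have "p*m' \<ge> 2*m'" using p2 by simp
      moreover have "p*(p*m') \<ge> 2*(p*m')" using p2 by simp
      ultimately have "m' < m" using mm m'nz by linarith
      then have ev: "even (multiplicity p m')" using less.IH m'i by blast
      have "multiplicity p m = Suc (Suc (multiplicity p m'))"
        unfolding mm using p2 m'nz by (simp add: multiplicity_times_same)
      then show ?thesis using ev by simp
    qed
  qed
qed

lemma sqfree_odd_mult:
  fixes p t :: nat
  assumes pr: "prime p" and d: "p dvd sqfree_part t"
  shows "odd (multiplicity p t)"
proof -
  have "p dvd (\<Prod>q\<in>prime_factors t. q ^ (multiplicity q t mod 2))" using d unfolding sqfree_part_def .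
  moreover have fin: "finite (prime_factors t)" by simp
  ultimately have "\<exists>q\<in>prime_factors t. p dvd q ^ (multiplicity q t mod 2)"
    using prime_dvd_prod_iff[OF fin pr] by simp
  then obtain q where q: "q \<in> prime_factors t" "p dvd q ^ (multiplicity q t mod 2)" by blast
  have pq: "prime q" using q(1) by auto
  have e: "multiplicity q t mod 2 \<noteq> 0"
  proof
    assume "multiplicity q t mod 2 = 0"
    then have "p dvd 1" using q(2) by simp
    then show False using pr by simp
  qed
  have "p dvd q" using q(2) pr prime_dvd_power by blast
  then have "p = q" using primes_dvd_imp_eq[OF pr pq] by simp
  then have "multiplicity p t mod 2 \<noteq> 0" using e by simp
  then show ?thesis by (simp add: even_iff_mod_2_eq_zero)
qed

lemma T_excl:
  fixes t :: nat and x y :: int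
  assumes tT: "t \<in> T" and tx: "int t = 2*(x^2+x*y+y^2)"
  shows False
proof -
  obtain p :: nat where p: "prime p" "odd p" "p dvd sqfree_part t" "p mod 3 = 2"
    using tT unfolding T_def by blast
  have t0: "t > 0" using tT unfolding T_def by blast
  define m where "m = nat (x^2+x*y+y^2)"
  have mi: "int m = x^2+x*y+y^2" unfolding m_def using eis_nonneg by simp
  have "int t = int (2*m)" using tx mi by simp
  then have tm: "t = 2*m" by (simp only: of_nat_eq_iff)
  have m0: "m \<noteq> 0" using tm t0 by auto
  have "multiplicity p t = multiplicity p 2 + multiplicity p m"
    unfolding tm using p(1) m0 by (simp add: prime_elem_multiplicity_mult_distrib)
  moreover have "multiplicity p (2::nat) = 0"
    using p(1,2) by (intro prime_multiplicity_other) auto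
  ultimately have "multiplicity p t = multiplicity p m" by simp
  moreover have "even (multiplicity p m)" using eis_mult_even[OF p(1) p(4) mi] .
  moreover have "odd (multiplicity p t)" using sqfree_odd_mult[OF p(1) p(3)] .
  ultimately show False by simp
qed



lemma abs_le5_mult: "\<bar>u::int\<bar> \<le> 5 \<Longrightarrow> \<bar>w\<bar> \<le> 5 \<Longrightarrow> \<bar>u*w\<bar> \<le> 25"
proof -
  assume "\<bar>u\<bar> \<le> 5" "\<bar>w\<bar> \<le> 5"
  then have "\<bar>u\<bar>*\<bar>w\<bar> \<le> 5*5" by (intro mult_mono) auto
  then show ?thesis by (simp add: abs_mult)
qed

lemma bound2:
  fixes u1 u2 u3 w1 w2 w3 a b c al be ga :: int
  assumes eu: "u1*a+u2*b+u3*c = 0" and ew: "w1*a+w2*b+w3*c = 0"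
    and nz: "u2*w3 - u3*w2 \<noteq> 0 \<or> u3*w1 - u1*w3 \<noteq> 0 \<or> u1*w2 - u2*w1 \<noteq> 0"
    and bu: "\<bar>u1\<bar> \<le> 5" "\<bar>u2\<bar> \<le> 5" "\<bar>u3\<bar> \<le> 5"
    and bw: "\<bar>w1\<bar> \<le> 5" "\<bar>w2\<bar> \<le> 5" "\<bar>w3\<bar> \<le> 5"
    and bz: "al*a+be*b+ga*c = 1"
  shows "\<bar>a\<bar> \<le> 50 \<and> \<bar>b\<bar> \<le> 50 \<and> \<bar>c\<bar> \<le> 50"
proof -
  define X1 where "X1 = u2*w3 - u3*w2"
  define X2 where "X2 = u3*w1 - u1*w3"
  define X3 where "X3 = u1*w2 - u2*w1"
  have i1: "a*X2 - b*X1 = u3*(w1*a+w2*b+w3*c) - w3*(u1*a+u2*b+u3*c)"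
    unfolding X1_def X2_def by (simp add: algebra_simps)
  have i2: "b*X3 - c*X2 = u1*(w1*a+w2*b+w3*c) - w1*(u1*a+u2*b+u3*c)"
    unfolding X2_def X3_def by (simp add: algebra_simps)
  have i3: "a*X3 - c*X1 = - u2*(w1*a+w2*b+w3*c) + w2*(u1*a+u2*b+u3*c)"
    unfolding X1_def X3_def by (simp add: algebra_simps)
  have r1: "a*X2 = b*X1" using i1 eu ew by simp
  have r2: "b*X3 = c*X2" using i2 eu ew by simp
  have r3: "a*X3 = c*X1" using i3 eu ew by simp
  define g where "g = al*X1 + be*X2 + ga*X3"
  have "a*g = al*a*X1 + be*(a*X2) + ga*(a*X3)" unfolding g_def by (simp add: algebra_simps)
  also have "\<dots> = al*a*X1 + be*(b*X1) + ga*(c*X1)" using r1 r3 by simp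
  also have "\<dots> = X1*(al*a+be*b+ga*c)" by (simp add: algebra_simps)
  finally have X1g: "X1 = a*g" using bz by simp
  have "b*g = al*(b*X1) + be*b*X2 + ga*(b*X3)" unfolding g_def by (simp add: algebra_simps)
  also have "\<dots> = al*(a*X2) + be*b*X2 + ga*(c*X2)" using r1 r2 by simp
  also have "\<dots> = X2*(al*a+be*b+ga*c)" by (simp add: algebra_simps)
  finally have X2g: "X2 = b*g" using bz by simp
  have "c*g = al*(c*X1) + be*(c*X2) + ga*c*X3" unfolding g_def by (simp add: algebra_simps)
  also have "\<dots> = al*(a*X3) + be*(b*X3) + ga*c*X3" using r2 r3 by simp
  also have "\<dots> = X3*(al*a+be*b+ga*c)" by (simp add: algebra_simps)
  finally have X3g: "X3 = c*g" using bz by simp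
  have gnz: "g \<noteq> 0" using nz X1g X2g X3g unfolding X1_def X2_def X3_def by auto
  have B: "\<bar>X1\<bar> \<le> 50" "\<bar>X2\<bar> \<le> 50" "\<bar>X3\<bar> \<le> 50"
    unfolding X1_def X2_def X3_def
    using abs_le5_mult[OF bu(2) bw(3)] abs_le5_mult[OF bu(3) bw(2)]
      abs_le5_mult[OF bu(3) bw(1)] abs_le5_mult[OF bu(1) bw(3)]
      abs_le5_mult[OF bu(1) bw(2)] abs_le5_mult[OF bu(2) bw(1)] by linarith+
  have g1: "\<bar>g\<bar> \<ge> 1" using gnz by arith
  have le: "\<bar>v\<bar> \<le> \<bar>v*g\<bar>" for v
    using g1 by (simp add: abs_mult mult_le_cancel_left1)
  show ?thesis using B X1g X2g X3g le[of a] le[of b] le[of c] by linarith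
qed

lemma par_zero1:
  fixes x1 x2 x3 y1 y2 y3 :: int
  assumes "x1*y2 = x2*y1" "x1*y3 = x3*y1" "x1 = 0" "x2 \<noteq> 0 \<or> x3 \<noteq> 0"
  shows "y1 = 0"
  using assms by auto

lemma rank1_core:
  fixes x1 x2 x3 y1 y2 y3 z1 z2 z3 :: int
  assumes x1: "\<bar>x1\<bar> = 1" and x2: "x2 \<noteq> 0" and x3: "x3 \<noteq> 0"
    and py: "x1*y2 = x2*y1" "x1*y3 = x3*y1"
    and pz: "x1*z2 = x2*z1" "x1*z3 = x3*z1"
    and bny: "\<bar>y1\<bar>+\<bar>y2\<bar>+\<bar>y3\<bar> \<le> 5" and bzz: "\<bar>z1\<bar>+\<bar>z2\<bar>+\<bar>z3\<bar> \<le> 5"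
    and oy: "odd (y1+y2+y3)" and oz: "odd (z1+z2+z3)"
    and c2: "\<bar>x2\<bar>+\<bar>y2\<bar>+\<bar>z2\<bar> \<le> 5" and c3: "\<bar>x3\<bar>+\<bar>y3\<bar>+\<bar>z3\<bar> \<le> 5"
  shows "\<bar>x2\<bar> = 1 \<and> \<bar>x3\<bar> = 1"
proof -
  have sq: "x1*x1 = 1" using x1 by (cases "x1 \<ge> 0") auto
  have gen: "\<bar>v1\<bar> = 1 \<and> \<bar>v2\<bar> = \<bar>x2\<bar> \<and> \<bar>v3\<bar> = \<bar>x3\<bar>"
    if pv: "x1*v2 = x2*v1" "x1*v3 = x3*v1" and bv: "\<bar>v1\<bar>+\<bar>v2\<bar>+\<bar>v3\<bar> \<le> 5" and ov: "odd (v1+v2+v3)"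
    for v1 v2 v3 :: int
  proof -
    have "x1*(x1*v2) = x1*(x2*v1)" using pv(1) by simp
    then have v2: "v2 = x1*x2*v1" using sq by (simp add: algebra_simps)
    have "x1*(x1*v3) = x1*(x3*v1)" using pv(2) by simp
    then have v3: "v3 = x1*x3*v1" using sq by (simp add: algebra_simps)
    have a2: "\<bar>v2\<bar> = \<bar>x2\<bar>*\<bar>v1\<bar>" using v2 x1 by (simp add: abs_mult)
    have a3: "\<bar>v3\<bar> = \<bar>x3\<bar>*\<bar>v1\<bar>" using v3 x1 by (simp add: abs_mult)
    have v1nz: "v1 \<noteq> 0"
    proof
      assume "v1 = 0"
      then have "v1+v2+v3 = 0" using v2 v3 by simp
      then show False using ov by simp
    qed
    have "\<bar>x2\<bar> \<ge> 1" "\<bar>x3\<bar> \<ge> 1" using x2 x3 by arith+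
    then have "\<bar>x2\<bar>*\<bar>v1\<bar> \<ge> \<bar>v1\<bar>" "\<bar>x3\<bar>*\<bar>v1\<bar> \<ge> \<bar>v1\<bar>"
      by (simp_all add: mult_le_cancel_right1)
    then have "3*\<bar>v1\<bar> \<le> 5" using bv a2 a3 by linarith
    then have "\<bar>v1\<bar> = 1" using v1nz by linarith
    then show ?thesis using a2 a3 by simp
  qed
  have Y: "\<bar>y2\<bar> = \<bar>x2\<bar>" "\<bar>y3\<bar> = \<bar>x3\<bar>" using gen[OF py bny oy] by auto
  have Z: "\<bar>z2\<bar> = \<bar>x2\<bar>" "\<bar>z3\<bar> = \<bar>x3\<bar>" using gen[OF pz bzz oz] by auto
  show ?thesis using Y Z c2 c3 x2 x3 by linarith
qed

lemma matrix_lemma: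
  fixes r11 r12 r13 r21 r22 r23 r31 r32 r33 a b c al be ga :: int
  assumes rb1: "\<bar>r11\<bar>+\<bar>r12\<bar>+\<bar>r13\<bar> \<le> 5" and rb2: "\<bar>r21\<bar>+\<bar>r22\<bar>+\<bar>r23\<bar> \<le> 5"
    and rb3: "\<bar>r31\<bar>+\<bar>r32\<bar>+\<bar>r33\<bar> \<le> 5"
    and cb1: "\<bar>r11\<bar>+\<bar>r21\<bar>+\<bar>r31\<bar> \<le> 5" and cb2: "\<bar>r12\<bar>+\<bar>r22\<bar>+\<bar>r32\<bar> \<le> 5"
    and cb3: "\<bar>r13\<bar>+\<bar>r23\<bar>+\<bar>r33\<bar> \<le> 5"
    and ro1: "odd (r11+r12+r13)" and ro2: "odd (r21+r22+r23)" and ro3: "odd (r31+r32+r33)"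
    and co1: "odd (r11+r21+r31)" and co2: "odd (r12+r22+r32)" and co3: "odd (r13+r23+r33)"
    and e1: "r11*a+r12*b+r13*c = 0" and e2: "r21*a+r22*b+r23*c = 0" and e3: "r31*a+r32*b+r33*c = 0"
    and bz: "al*a+be*b+ga*c = 1"
  shows "(\<bar>a\<bar> \<le> 50 \<and> \<bar>b\<bar> \<le> 50 \<and> \<bar>c\<bar> \<le> 50) \<or>
         (\<exists>s1 s2 s3. \<bar>s1\<bar> = 1 \<and> \<bar>s2\<bar> = 1 \<and> \<bar>s3\<bar> = 1 \<and> s1*a+s2*b+s3*c = 0)"
proof (cases "r12*r23 - r13*r22 \<noteq> 0 \<or> r13*r21 - r11*r23 \<noteq> 0 \<or> r11*r22 - r12*r21 \<noteq> 0")
  case True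
  have "\<bar>r11\<bar> \<le> 5" "\<bar>r12\<bar> \<le> 5" "\<bar>r13\<bar> \<le> 5" "\<bar>r21\<bar> \<le> 5" "\<bar>r22\<bar> \<le> 5" "\<bar>r23\<bar> \<le> 5"
    using rb1 rb2 by linarith+
  then show ?thesis using bound2[OF e1 e2 True _ _ _ _ _ _ bz] by blast
next
  case F12: False
  show ?thesis
  proof (cases "r12*r33 - r13*r32 \<noteq> 0 \<or> r13*r31 - r11*r33 \<noteq> 0 \<or> r11*r32 - r12*r31 \<noteq> 0")
    case True
    have "\<bar>r11\<bar> \<le> 5" "\<bar>r12\<bar> \<le> 5" "\<bar>r13\<bar> \<le> 5" "\<bar>r31\<bar> \<le> 5" "\<bar>r32\<bar> \<le> 5" "\<bar>r33\<bar> \<le> 5"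
      using rb1 rb3 by linarith+
    then show ?thesis using bound2[OF e1 e3 True _ _ _ _ _ _ bz] by blast
  next
    case F13: False
    have py: "r11*r22 = r12*r21" "r11*r23 = r13*r21" "r12*r23 = r13*r22" using F12 by auto
    have pz: "r11*r32 = r12*r31" "r11*r33 = r13*r31" "r12*r33 = r13*r32" using F13 by auto
    have n1: "r11 \<noteq> 0"
    proof
      assume z: "r11 = 0"
      have nz: "r12 \<noteq> 0 \<or> r13 \<noteq> 0" using ro1 z by auto
      have "r21 = 0" using par_zero1[OF py(1) py(2) z nz] .
      moreover have "r31 = 0" using par_zero1[OF pz(1) pz(2) z nz] .
      ultimately show False using co1 z by simp
    qed
    have n2: "r12 \<noteq> 0"
    proof
      assume z: "r12 = 0"
      have nz: "r11 \<noteq> 0 \<or> r13 \<noteq> 0" using ro1 z by auto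
      have "r22 = 0" using par_zero1[of r12 r21 r11 r22 r23 r13] py z nz by auto
      moreover have "r32 = 0" using par_zero1[of r12 r31 r11 r32 r33 r13] pz z nz by auto
      ultimately show False using co2 z by simp
    qed
    have n3: "r13 \<noteq> 0"
    proof
      assume z: "r13 = 0"
      have nz: "r11 \<noteq> 0 \<or> r12 \<noteq> 0" using ro1 z by auto
      have "r23 = 0" using par_zero1[of r13 r21 r11 r23 r22 r12] py z nz by auto
      moreover have "r33 = 0" using par_zero1[of r13 r31 r11 r33 r32 r12] pz z nz by auto
      ultimately show False using co3 z by simp
    qed
    have one: "\<bar>r11\<bar> = 1 \<or> \<bar>r12\<bar> = 1 \<or> \<bar>r13\<bar> = 1" using n1 n2 n3 rb1 by arith
    have all1: "\<bar>r11\<bar> = 1 \<and> \<bar>r12\<bar> = 1 \<and> \<bar>r13\<bar> = 1"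
    proof -
      { assume h: "\<bar>r11\<bar> = 1"
        have ?thesis using rank1_core[OF h n2 n3 py(1) py(2) pz(1) pz(2) rb2 rb3 ro2 ro3 cb2 cb3] h by simp }
      moreover
      { assume h: "\<bar>r12\<bar> = 1"
        have q1: "r12*r21 = r11*r22" "r12*r23 = r13*r22" "r12*r31 = r11*r32" "r12*r33 = r13*r32"
          using py pz by simp_all
        have q2: "\<bar>r22\<bar>+\<bar>r21\<bar>+\<bar>r23\<bar> \<le> 5" "\<bar>r32\<bar>+\<bar>r31\<bar>+\<bar>r33\<bar> \<le> 5" using rb2 rb3 by linarith+
        have q3: "odd (r22+r21+r23)" "odd (r32+r31+r33)" using ro2 ro3 by (simp_all add: ac_simps)
        have "\<bar>r11\<bar> = 1 \<and> \<bar>r13\<bar> = 1"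
          using rank1_core[OF h n1 n3 q1 q2 q3 cb1 cb3] .
        then have ?thesis using h by simp }
      moreover
      { assume h: "\<bar>r13\<bar> = 1"
        have q1: "r13*r21 = r11*r23" "r13*r22 = r12*r23" "r13*r31 = r11*r33" "r13*r32 = r12*r33"
          using py pz by simp_all
        have q2: "\<bar>r23\<bar>+\<bar>r21\<bar>+\<bar>r22\<bar> \<le> 5" "\<bar>r33\<bar>+\<bar>r31\<bar>+\<bar>r32\<bar> \<le> 5" using rb2 rb3 by linarith+
        have q3: "odd (r23+r21+r22)" "odd (r33+r31+r32)" using ro2 ro3 by (simp_all add: ac_simps)
        have "\<bar>r11\<bar> = 1 \<and> \<bar>r12\<bar> = 1"
          using rank1_core[OF h n1 n2 q1 q2 q3 cb1 cb2] .
        then have ?thesis using h by simp }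
      ultimately show ?thesis using one by blast
    qed
    then show ?thesis using e1 by blast
  qed
qed



lemma sperm_of_P1:
  fixes t a b c :: nat and x y z :: int
  assumes S: "{(a',b',c'). a' \<le> b' \<and> b' \<le> c' \<and> a'^2+b'^2+c'^2 = t} = {(a,b,c)}"
    and xyz: "x^2+y^2+z^2 = int t"
  shows "(\<bar>x\<bar>,\<bar>y\<bar>,\<bar>z\<bar>) \<in> {(int a,int b,int c),(int a,int c,int b),(int b,int a,int c),
            (int b,int c,int a),(int c,int a,int b),(int c,int b,int a)}"
proof -
  define X where "X = nat \<bar>x\<bar>"
  define Y where "Y = nat \<bar>y\<bar>"
  define Z where "Z = nat \<bar>z\<bar>"
  have iX: "int X = \<bar>x\<bar>" "int Y = \<bar>y\<bar>" "int Z = \<bar>z\<bar>" unfolding X_def Y_def Z_def by simp_all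
  have "int (X^2+Y^2+Z^2) = \<bar>x\<bar>^2+\<bar>y\<bar>^2+\<bar>z\<bar>^2" using iX by simp
  also have "\<dots> = int t" using xyz by simp
  finally have nt: "X^2+Y^2+Z^2 = t" by (simp only: of_nat_eq_iff)
  have mem: "(a',b',c') = (a,b,c)" if "a' \<le> b'" "b' \<le> c'" "a'^2+b'^2+c'^2 = t" for a' b' c'
  proof -
    have "(a',b',c') \<in> {(a',b',c'). a' \<le> b' \<and> b' \<le> c' \<and> a'^2+b'^2+c'^2 = t}" using that by simp
    then show ?thesis using S by simp
  qed
  consider "X \<le> Y \<and> Y \<le> Z" | "X \<le> Z \<and> Z \<le> Y" | "Y \<le> X \<and> X \<le> Z" | "Y \<le> Z \<and> Z \<le> X"
    | "Z \<le> X \<and> X \<le> Y" | "Z \<le> Y \<and> Y \<le> X" by linarith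
  then show ?thesis
  proof cases
    case 1 then have "(X,Y,Z) = (a,b,c)" using mem nt by blast
    then show ?thesis using iX by auto
  next
    case 2
    have "X^2+Z^2+Y^2 = t" using nt by (simp add: ac_simps)
    then have "(X,Z,Y) = (a,b,c)" using mem[of X Z Y] 2 by blast
    then show ?thesis using iX by auto
  next
    case 3
    have "Y^2+X^2+Z^2 = t" using nt by (simp add: ac_simps)
    then have "(Y,X,Z) = (a,b,c)" using mem[of Y X Z] 3 by blast
    then show ?thesis using iX by auto
  next
    case 4
    have "Y^2+Z^2+X^2 = t" using nt by (simp add: ac_simps)
    then have "(Y,Z,X) = (a,b,c)" using mem[of Y Z X] 4 by blast
    then show ?thesis using iX by auto
  next
    case 5
    have "Z^2+X^2+Y^2 = t" using nt by (simp add: ac_simps)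
    then have "(Z,X,Y) = (a,b,c)" using mem[of Z X Y] 5 by blast
    then show ?thesis using iX by auto
  next
    case 6
    have "Z^2+Y^2+X^2 = t" using nt by (simp add: ac_simps)
    then have "(Z,Y,X) = (a,b,c)" using mem[of Z Y X] 6 by blast
    then show ?thesis using iX by auto
  qed
qed

inductive reach :: "nat \<Rightarrow> int \<Rightarrow> int \<Rightarrow> int \<Rightarrow> bool \<Rightarrow> bool" for t where
  r0: "reach t 0 0 0 False"
| rs: "reach t x y z e \<Longrightarrow> u^2+v^2+w^2 = int t \<Longrightarrow> reach t (x+u) (y+v) (z+w) (\<not>e)"

lemma sqnorm3: "sqnorm [x,y,z] = x^2+y^2+z^2"
  by (simp add: sqnorm_def)

lemma reach_config:
  assumes "reach t x y z e"
  shows "\<exists>(n::nat) vs. (\<forall>i<n. length (vs i) = 3 \<and> sqnorm (vs i) = int t) \<and>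
     (\<Sum>i<n. vs i ! 0) = x \<and> (\<Sum>i<n. vs i ! 1) = y \<and> (\<Sum>i<n. vs i ! 2) = z \<and> (odd n \<longleftrightarrow> e)"
  using assms
proof (induction rule: reach.induct)
  case r0
  show ?case by (intro exI[of _ 0] exI[of _ "\<lambda>_. []"]) simp
next
  case (rs x y z e u v w)
  then obtain n :: nat and vs where h: "\<forall>i<n. length (vs i) = 3 \<and> sqnorm (vs i) = int t"
     "(\<Sum>i<n. vs i ! 0) = x" "(\<Sum>i<n. vs i ! 1) = y" "(\<Sum>i<n. vs i ! 2) = z" "(odd n \<longleftrightarrow> e)" by blast
  define vs' where "vs' = vs(n := [u,v,w])"
  have eq: "(\<Sum>i<n. vs' i ! j) = (\<Sum>i<n. vs i ! j)" for j
    by (rule sum.cong) (auto simp: vs'_def)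
  have "\<forall>i<Suc n. length (vs' i) = 3 \<and> sqnorm (vs' i) = int t"
    using h(1) rs.hyps(2) by (auto simp: vs'_def sqnorm3 less_Suc_eq)
  moreover have "(\<Sum>i<Suc n. vs' i ! 0) = x + u" "(\<Sum>i<Suc n. vs' i ! 1) = y + v" "(\<Sum>i<Suc n. vs' i ! 2) = z + w"
    using eq h by (simp_all add: vs'_def)
  moreover have "odd (Suc n) \<longleftrightarrow> \<not> e" using h(5) by simp
  ultimately show ?case by blast
qed

lemma reach_diff:
  assumes "reach t x y z e" "u^2+v^2+w^2 = int t" "u'^2+v'^2+w'^2 = int t"
  shows "reach t (x+(u-u')) (y+(v-v')) (z+(w-w')) e"
proof -
  have "reach t (x+u) (y+v) (z+w) (\<not>e)" using assms(1,2) by (rule rs)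
  moreover have "(-u')^2+(-v')^2+(-w')^2 = int t" using assms(3) by simp
  ultimately have "reach t (x+u+(-u')) (y+v+(-v')) (z+w+(-w')) (\<not>\<not>e)" by (rule rs)
  then show ?thesis by (simp add: algebra_simps)
qed

lemma reach_mult_nat:
  assumes "reach t x y z e" "u^2+v^2+w^2 = int t" "u'^2+v'^2+w'^2 = int t"
  shows "reach t (x+int k*(u-u')) (y+int k*(v-v')) (z+int k*(w-w')) e"
proof (induction k)
  case 0 then show ?case using assms(1) by simp
next
  case (Suc k)
  from reach_diff[OF Suc assms(2,3)] show ?case by (simp add: algebra_simps)
qed

lemma reach_mult:
  assumes "reach t x y z e" "u^2+v^2+w^2 = int t" "u'^2+v'^2+w'^2 = int t"
  shows "reach t (x+m*(u-u')) (y+m*(v-v')) (z+m*(w-w')) e"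
proof (cases "m \<ge> 0")
  case True
  then show ?thesis using reach_mult_nat[OF assms, of "nat m"] by simp
next
  case False
  have "reach t (x+int (nat (-m))*(u'-u)) (y+int (nat (-m))*(v'-v)) (z+int (nat (-m))*(w'-w)) e"
    using reach_mult_nat[OF assms(1,3,2)] by blast
  then show ?thesis using False by (simp add: algebra_simps)
qed

lemma reach_e1:
  assumes "reach t x y z e" "p^2+q^2+r^2 = int t"
  shows "reach t (x+m*(2*p)) y z e"
  using reach_mult[OF assms(1) assms(2), of "-p" q r m] assms(2) by simp

lemma reach_e2:
  assumes "reach t x y z e" "p^2+q^2+r^2 = int t"
  shows "reach t x (y+m*(2*p)) z e"
proof -
  have "q^2+p^2+r^2 = int t" "q^2+(-p)^2+r^2 = int t" using assms(2) by (simp_all add: algebra_simps)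
  from reach_mult[OF assms(1) this, of m] show ?thesis by simp
qed

lemma reach_e3:
  assumes "reach t x y z e" "p^2+q^2+r^2 = int t"
  shows "reach t x y (z+m*(2*p)) e"
proof -
  have "q^2+r^2+p^2 = int t" "q^2+r^2+(-p)^2 = int t" using assms(2) by (simp_all add: algebra_simps)
  from reach_mult[OF assms(1) this, of m] show ?thesis by simp
qed

lemma odd_config_exists:
  fixes A B Cc al be ga :: int and t :: nat
  assumes nt: "A^2+B^2+Cc^2 = int t" and ev: "even t" and bz: "al*A+be*B+ga*Cc = 1"
  shows "\<exists>n. odd n \<and> zero_sum_config 3 t n"
proof -
  have n1: "A^2+B^2+Cc^2 = int t" "Cc^2+B^2+A^2 = int t" "A^2+Cc^2+B^2 = int t" "B^2+A^2+Cc^2 = int t"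
    "B^2+Cc^2+A^2 = int t" "Cc^2+A^2+B^2 = int t"
    using nt by (simp_all add: algebra_simps)
  have "reach t (0+A) (0+B) (0+Cc) (\<not>False)" using r0 n1(1) by (rule rs)
  then have s1: "reach t A B Cc True" by simp
  have s2: "reach t (A+(A-Cc)) (B+(B-B)) (Cc+(Cc-A)) True" using reach_diff[OF s1 n1(1) n1(2)] .
  have s3: "reach t (A+(A-Cc)+(A-A)) (B+(B-B)+(B-Cc)) (Cc+(Cc-A)+(Cc-B)) True"
    using reach_diff[OF s2 n1(1) n1(3)] .
  have s4: "reach t (A+(A-Cc)+(A-A)+(A-B)) (B+(B-B)+(B-Cc)+(B-A)) (Cc+(Cc-A)+(Cc-B)+(Cc-Cc)) True"
    using reach_diff[OF s3 n1(1) n1(4)] .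
  have par: "even (A+B+Cc)"
  proof -
    have "even (A^2+B^2+Cc^2)" using nt ev by simp
    then show ?thesis by (simp add: even_add)
  qed
  obtain k where k: "A+B+Cc = 2*k" using par by blast
  define X where "X = 2*A - k"
  define Y where "Y = 2*B - k"
  define Z where "Z = 2*Cc - k"
  have "A+(A-Cc)+(A-A)+(A-B) = 2*X" "B+(B-B)+(B-Cc)+(B-A) = 2*Y" "Cc+(Cc-A)+(Cc-B)+(Cc-Cc) = 2*Z"
    unfolding X_def Y_def Z_def using k by (simp_all add: algebra_simps)
  then have s5: "reach t (2*X) (2*Y) (2*Z) True" using s4 by simp
  have t1: "reach t (2*X + (-X*al)*(2*A)) (2*Y) (2*Z) True" using reach_e1[OF s5 n1(1)] .
  have t2: "reach t (2*X + (-X*al)*(2*A) + (-X*be)*(2*B)) (2*Y) (2*Z) True" using reach_e1[OF t1 n1(4)] .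
  have t3: "reach t (2*X + (-X*al)*(2*A) + (-X*be)*(2*B) + (-X*ga)*(2*Cc)) (2*Y) (2*Z) True" using reach_e1[OF t2 n1(2)] .
  have x0: "2*X + (-X*al)*(2*A) + (-X*be)*(2*B) + (-X*ga)*(2*Cc) = 2*X*(1 - (al*A+be*B+ga*Cc))" by (simp add: algebra_simps)
  have t3': "reach t 0 (2*Y) (2*Z) True" using t3 unfolding x0 bz by simp
  have t4: "reach t 0 (2*Y + (-Y*al)*(2*A)) (2*Z) True" using reach_e2[OF t3' n1(1)] .
  have t5: "reach t 0 (2*Y + (-Y*al)*(2*A) + (-Y*be)*(2*B)) (2*Z) True" using reach_e2[OF t4 n1(4)] .
  have t6: "reach t 0 (2*Y + (-Y*al)*(2*A) + (-Y*be)*(2*B) + (-Y*ga)*(2*Cc)) (2*Z) True" using reach_e2[OF t5 n1(6)] .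
  have y0: "2*Y + (-Y*al)*(2*A) + (-Y*be)*(2*B) + (-Y*ga)*(2*Cc) = 2*Y*(1 - (al*A+be*B+ga*Cc))" by (simp add: algebra_simps)
  have t6': "reach t 0 0 (2*Z) True" using t6 unfolding y0 bz by simp
  have t7: "reach t 0 0 (2*Z + (-Z*al)*(2*A)) True" using reach_e3[OF t6' n1(1)] .
  have t8: "reach t 0 0 (2*Z + (-Z*al)*(2*A) + (-Z*be)*(2*B)) True" using reach_e3[OF t7 n1(4)] .
  have t9: "reach t 0 0 (2*Z + (-Z*al)*(2*A) + (-Z*be)*(2*B) + (-Z*ga)*(2*Cc)) True" using reach_e3[OF t8 n1(6)] .
  have z0: "2*Z + (-Z*al)*(2*A) + (-Z*be)*(2*B) + (-Z*ga)*(2*Cc) = 2*Z*(1 - (al*A+be*B+ga*Cc))" by (simp add: algebra_simps)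
  have fin: "reach t 0 0 0 True" using t9 unfolding z0 bz by simp
  obtain n :: nat and vs where h: "\<forall>i<n. length (vs i) = 3 \<and> sqnorm (vs i) = int t"
     "(\<Sum>i<n. vs i ! 0) = 0" "(\<Sum>i<n. vs i ! 1) = 0" "(\<Sum>i<n. vs i ! 2) = 0" "odd n"
    using reach_config[OF fin] by blast
  have "\<forall>j<3. (\<Sum>i<n. vs i ! j) = 0"
  proof (intro allI impI)
    fix j :: nat assume "j < 3"
    then have "j = 0 \<or> j = 1 \<or> j = 2" by auto
    then show "(\<Sum>i<n. vs i ! j) = 0" using h by auto
  qed
  then have "zero_sum_config 3 t n" unfolding zero_sum_config_def using h(1) by blast
  then show ?thesis using h(5) by blast
qed



definition tau :: "nat \<Rightarrow> nat \<Rightarrow> nat" where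
  "tau s j = [[0,1,2],[0,2,1],[1,0,2],[1,2,0],[2,0,1],[2,1,0::nat]] ! s ! j"

definition ind :: "nat \<Rightarrow> nat \<Rightarrow> nat \<Rightarrow> int" where
  "ind s j k = (if tau s j = k then 1 else 0)"

definition sg :: "int \<Rightarrow> int" where
  "sg x = (if x < 0 then -1 else 1)"

lemma six_cases: "(s::nat) < 6 \<Longrightarrow> s = 0 \<or> s = 1 \<or> s = 2 \<or> s = 3 \<or> s = 4 \<or> s = 5"
  by auto

lemma three_cases: "(j::nat) < 3 \<Longrightarrow> j = 0 \<or> j = 1 \<or> j = 2"
  by auto

lemma P1: "s < 6 \<Longrightarrow> j < 3 \<Longrightarrow> ind s j 0 + ind s j 1 + ind s j 2 = 1"
  by (drule six_cases, drule three_cases) (auto simp: ind_def tau_def)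

lemma P2: "s < 6 \<Longrightarrow> k < 3 \<Longrightarrow> ind s 0 k + ind s 1 k + ind s 2 k = 1"
  by (drule six_cases, drule three_cases) (auto simp: ind_def tau_def)

lemma P3: "s < 6 \<Longrightarrow> k < 3 \<Longrightarrow> odd s0 \<Longrightarrow> odd s1 \<Longrightarrow> odd s2 \<Longrightarrow>
   odd (ind s 0 k * s0 + ind s 1 k * s1 + ind s 2 k * (s2::int))"
  by (drule six_cases, drule three_cases) (auto simp: ind_def tau_def)

lemma P4: "s < 6 \<Longrightarrow> j < 3 \<Longrightarrow> ind s j 0 * A + ind s j 1 * B + ind s j 2 * Cc = [A,B,Cc] ! tau s j"
  by (drule six_cases, drule three_cases) (auto simp: ind_def tau_def)

lemma ind_ge0: "ind s j k \<ge> 0" and ind_le1: "ind s j k \<le> 1"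
  by (auto simp: ind_def)

lemma sg_odd: "odd (sg x)" by (simp add: sg_def)
lemma sg_abs: "sg x * \<bar>x\<bar> = x" by (simp add: sg_def)
lemma abs_sg: "\<bar>sg x\<bar> = 1" by (simp add: sg_def)

lemma odd_sum_odd:
  fixes f :: "nat \<Rightarrow> int"
  shows "(\<And>i. i < n \<Longrightarrow> odd (f i)) \<Longrightarrow> odd (\<Sum>i<n. f i) = odd n"
  by (induction n) auto

lemma sperm_sigma:
  fixes x y z A B Cc :: int
  assumes "(\<bar>x\<bar>,\<bar>y\<bar>,\<bar>z\<bar>) \<in> {(A,B,Cc),(A,Cc,B),(B,A,Cc),(B,Cc,A),(Cc,A,B),(Cc,B,A)}"
  shows "\<exists>s<6. \<bar>x\<bar> = [A,B,Cc] ! tau s 0 \<and> \<bar>y\<bar> = [A,B,Cc] ! tau s 1 \<and> \<bar>z\<bar> = [A,B,Cc] ! tau s 2"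
proof -
  from assms consider "(\<bar>x\<bar>,\<bar>y\<bar>,\<bar>z\<bar>) = (A,B,Cc)" | "(\<bar>x\<bar>,\<bar>y\<bar>,\<bar>z\<bar>) = (A,Cc,B)" | "(\<bar>x\<bar>,\<bar>y\<bar>,\<bar>z\<bar>) = (B,A,Cc)"
    | "(\<bar>x\<bar>,\<bar>y\<bar>,\<bar>z\<bar>) = (B,Cc,A)" | "(\<bar>x\<bar>,\<bar>y\<bar>,\<bar>z\<bar>) = (Cc,A,B)" | "(\<bar>x\<bar>,\<bar>y\<bar>,\<bar>z\<bar>) = (Cc,B,A)" by blast
  then show ?thesis
  proof cases
    case 1 then show ?thesis by (intro exI[of _ 0]) (simp add: tau_def)
  next
    case 2 then show ?thesis by (intro exI[of _ 1]) (simp add: tau_def)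
  next
    case 3 then show ?thesis by (intro exI[of _ 2]) (simp add: tau_def)
  next
    case 4 then show ?thesis by (intro exI[of _ 3]) (simp add: tau_def)
  next
    case 5 then show ?thesis by (intro exI[of _ 4]) (simp add: tau_def)
  next
    case 6 then show ?thesis by (intro exI[of _ 5]) (simp add: tau_def)
  qed
qed

lemma len3: "length l = 3 \<Longrightarrow> l = [l!0, l!1, l!2]"
  by (cases l; cases "tl l"; cases "tl (tl l)") auto

lemma no_small_config:
  fixes t n :: nat and A B Cc al be ga :: int
  assumes SP: "\<And>x y z. x^2+y^2+z^2 = int t \<Longrightarrow>
      (\<bar>x\<bar>,\<bar>y\<bar>,\<bar>z\<bar>) \<in> {(A,B,Cc),(A,Cc,B),(B,A,Cc),(B,Cc,A),(Cc,A,B),(Cc,B,A)}"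
    and tT: "t \<in> T" and big: "t \<ge> 10^6" and nt: "A^2+B^2+Cc^2 = int t"
    and bz: "al*A+be*B+ga*Cc = 1"
    and cfg: "zero_sum_config 3 t n" and on: "odd n" and n5: "n \<le> 5"
  shows False
proof -
  obtain vs where vs: "\<forall>i<n. length (vs i) = 3 \<and> sqnorm (vs i) = int t" "\<forall>j<3. (\<Sum>i<n. vs i ! j) = 0"
    using cfg unfolding zero_sum_config_def by blast
  define v where "v i j = vs i ! j" for i j
  have vn: "(v i 0)^2 + (v i 1)^2 + (v i 2)^2 = int t" if "i<n" for i
  proof -
    have "vs i = [v i 0, v i 1, v i 2]" unfolding v_def using len3 vs(1) that by blast
    then have "sqnorm (vs i) = (v i 0)^2 + (v i 1)^2 + (v i 2)^2" by (simp add: sqnorm3)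
    then show ?thesis using vs(1) that by simp
  qed
  have vsum: "(\<Sum>i<n. v i j) = 0" if "j<3" for j unfolding v_def using vs(2) that by simp
  let ?val = "\<lambda>k. [A,B,Cc] ! k"
  have ex: "\<exists>s<6. \<bar>v i 0\<bar> = ?val (tau s 0) \<and> \<bar>v i 1\<bar> = ?val (tau s 1) \<and> \<bar>v i 2\<bar> = ?val (tau s 2)"
    if "i<n" for i using sperm_sigma[OF SP[OF vn[OF that]]] .
  define sig where "sig i = (SOME s. s<6 \<and> \<bar>v i 0\<bar> = ?val (tau s 0) \<and> \<bar>v i 1\<bar> = ?val (tau s 1) \<and> \<bar>v i 2\<bar> = ?val (tau s 2))" for i
  have sig: "sig i < 6 \<and> \<bar>v i 0\<bar> = ?val (tau (sig i) 0) \<and> \<bar>v i 1\<bar> = ?val (tau (sig i) 1) \<and> \<bar>v i 2\<bar> = ?val (tau (sig i) 2)"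
    if "i<n" for i
    using someI_ex[OF ex[OF that]] unfolding sig_def .
  have sig6: "sig i < 6" if "i<n" for i using sig[OF that] by blast
  have sigv: "\<bar>v i j\<bar> = ?val (tau (sig i) j)" if "i<n" "j<3" for i j
    using sig[OF that(1)] three_cases[OF that(2)] by auto
  define R where "R j k = (\<Sum>i<n. ind (sig i) j k * sg (v i j))" for j k
  define N where "N j k = (\<Sum>i<n. ind (sig i) j k)" for j k
  have RN: "\<bar>R j k\<bar> \<le> N j k" for j k
  proof -
    have "\<bar>R j k\<bar> \<le> (\<Sum>i<n. \<bar>ind (sig i) j k * sg (v i j)\<bar>)" unfolding R_def by (rule sum_abs)
    also have "\<dots> = N j k" unfolding N_def
      by (rule sum.cong) (simp_all add: abs_mult abs_sg ind_ge0)
    finally show ?thesis .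
  qed
  have Nrow: "N j 0 + N j 1 + N j 2 = int n" if "j<3" for j
  proof -
    have "N j 0 + N j 1 + N j 2 = (\<Sum>i<n. ind (sig i) j 0 + ind (sig i) j 1 + ind (sig i) j 2)"
      unfolding N_def by (simp add: sum.distrib)
    also have "\<dots> = (\<Sum>i<n. 1)" by (rule sum.cong[OF refl], rule P1[OF sig6 that], simp)
    finally show ?thesis by simp
  qed
  have Ncol: "N 0 k + N 1 k + N 2 k = int n" if "k<3" for k
  proof -
    have "N 0 k + N 1 k + N 2 k = (\<Sum>i<n. ind (sig i) 0 k + ind (sig i) 1 k + ind (sig i) 2 k)"
      unfolding N_def by (simp add: sum.distrib)
    also have "\<dots> = (\<Sum>i<n. 1)" by (rule sum.cong[OF refl], rule P2[OF sig6 that], simp)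
    finally show ?thesis by simp
  qed
  have Rrow: "odd (R j 0 + R j 1 + R j 2)" if "j<3" for j
  proof -
    have "R j 0 + R j 1 + R j 2 = (\<Sum>i<n. (ind (sig i) j 0 + ind (sig i) j 1 + ind (sig i) j 2) * sg (v i j))"
      unfolding R_def by (simp add: sum.distrib algebra_simps)
    also have "\<dots> = (\<Sum>i<n. sg (v i j))"
    proof (rule sum.cong[OF refl])
      fix i assume "i \<in> {..<n}"
      then have "ind (sig i) j 0 + ind (sig i) j 1 + ind (sig i) j 2 = 1" using P1[OF sig6 that] by simp
      then show "(ind (sig i) j 0 + ind (sig i) j 1 + ind (sig i) j 2) * sg (v i j) = sg (v i j)" by simp
    qed
    finally show ?thesis using odd_sum_odd[of n "\<lambda>i. sg (v i j)"] sg_odd on by simp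
  qed
  have Rcol: "odd (R 0 k + R 1 k + R 2 k)" if "k<3" for k
  proof -
    have "R 0 k + R 1 k + R 2 k = (\<Sum>i<n. ind (sig i) 0 k * sg (v i 0) + ind (sig i) 1 k * sg (v i 1) + ind (sig i) 2 k * sg (v i 2))"
      unfolding R_def by (simp add: sum.distrib)
    moreover have "odd (\<Sum>i<n. ind (sig i) 0 k * sg (v i 0) + ind (sig i) 1 k * sg (v i 1) + ind (sig i) 2 k * sg (v i 2))"
      using odd_sum_odd[of n] P3[OF sig6 that sg_odd sg_odd sg_odd] on by simp
    ultimately show ?thesis by simp
  qed
  have Req: "R j 0 * A + R j 1 * B + R j 2 * Cc = 0" if "j<3" for j
  proof -
    have "R j 0 * A + R j 1 * B + R j 2 * Cc = (\<Sum>i<n. sg (v i j) * (ind (sig i) j 0 * A + ind (sig i) j 1 * B + ind (sig i) j 2 * Cc))"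
      unfolding R_def by (simp add: sum.distrib sum_distrib_left algebra_simps)
    also have "\<dots> = (\<Sum>i<n. v i j)"
    proof (rule sum.cong)
      fix i assume "i \<in> {..<n}"
      then have i: "i < n" by simp
      have "sg (v i j) * (ind (sig i) j 0 * A + ind (sig i) j 1 * B + ind (sig i) j 2 * Cc) = sg (v i j) * \<bar>v i j\<bar>"
        using P4[OF sig6[OF i] that] sigv[OF i that] by simp
      then show "sg (v i j) * (ind (sig i) j 0 * A + ind (sig i) j 1 * B + ind (sig i) j 2 * Cc) = v i j"
        by (simp add: sg_abs)
    qed simp
    also have "\<dots> = 0" using vsum[OF that] .
    finally show ?thesis .
  qed
  have rowb: "\<bar>R j 0\<bar> + \<bar>R j 1\<bar> + \<bar>R j 2\<bar> \<le> 5" if "j<3" for j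
    using RN[of j 0] RN[of j 1] RN[of j 2] Nrow[OF that] n5 by linarith
  have colb: "\<bar>R 0 k\<bar> + \<bar>R 1 k\<bar> + \<bar>R 2 k\<bar> \<le> 5" if "k<3" for k
    using RN[of 0 k] RN[of 1 k] RN[of 2 k] Ncol[OF that] n5 by linarith
  have e1: "R 0 0 * A + R 0 1 * B + R 0 2 * Cc = 0" using Req[of 0] by simp
  have e2: "R 1 0 * A + R 1 1 * B + R 1 2 * Cc = 0" using Req[of 1] by simp
  have e3: "R 2 0 * A + R 2 1 * B + R 2 2 * Cc = 0" using Req[of 2] by simp
  have mlem: "(\<bar>A\<bar> \<le> 50 \<and> \<bar>B\<bar> \<le> 50 \<and> \<bar>Cc\<bar> \<le> 50) \<or>
         (\<exists>s1 s2 s3. \<bar>s1\<bar> = 1 \<and> \<bar>s2\<bar> = 1 \<and> \<bar>s3\<bar> = 1 \<and> s1*A+s2*B+s3*Cc = 0)"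
    by (rule matrix_lemma[OF rowb[of 0] rowb[of 1] rowb[of 2] colb[of 0] colb[of 1] colb[of 2]
          Rrow[of 0] Rrow[of 1] Rrow[of 2] Rcol[of 0] Rcol[of 1] Rcol[of 2] e1 e2 e3 bz]) simp_all
  then show False
  proof
    assume b: "\<bar>A\<bar> \<le> 50 \<and> \<bar>B\<bar> \<le> 50 \<and> \<bar>Cc\<bar> \<le> 50"
    have sqb: "w^2 \<le> 2500" if "\<bar>w\<bar> \<le> 50" for w :: int
    proof -
      have "\<bar>w\<bar>^2 \<le> 50^2" using that by (intro power_mono) auto
      then show ?thesis by simp
    qed
    have "int t \<le> 7500" using nt sqb[of A] sqb[of B] sqb[of Cc] b by linarith
    then show False using big by simp
  next
    assume "\<exists>s1 s2 s3. \<bar>s1\<bar> = 1 \<and> \<bar>s2\<bar> = 1 \<and> \<bar>s3\<bar> = 1 \<and> s1*A+s2*B+s3*Cc = 0"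
    then obtain s1 s2 s3 :: int where s: "\<bar>s1\<bar> = 1" "\<bar>s2\<bar> = 1" "\<bar>s3\<bar> = 1" "s1*A+s2*B+s3*Cc = 0" by blast
    have sq1: "s1*s1 = 1" "s2*s2 = 1" "s3*s3 = 1" using s(1-3) by (auto simp: abs_if split: if_splits)
    have "Cc^2 = (s3*s3)*Cc^2" using sq1 by simp
    also have "\<dots> = (s3*Cc)^2" by (simp add: power2_eq_square algebra_simps)
    also have "s3*Cc = -(s1*A+s2*B)" using s(4) by simp
    finally have "Cc^2 = (s1*A+s2*B)^2" by (simp add: power2_eq_square algebra_simps)
    also have "\<dots> = (s1*s1)*A^2 + 2*(s1*s2)*A*B + (s2*s2)*B^2" by (simp add: power2_eq_square algebra_simps)
    finally have c2: "Cc^2 = A^2 + 2*(s1*s2)*A*B + B^2" using sq1 by simp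
    have "(s1*s2*B)^2 = (s1*s1)*(s2*s2)*B^2" by (simp add: power2_eq_square algebra_simps)
    then have yb: "(s1*s2*B)^2 = B^2" using sq1 by simp
    have "int t = 2*(A^2 + A*(s1*s2*B) + B^2)" using nt c2 by (simp add: algebra_simps)
    moreover have "A^2 + A*(s1*s2*B) + (s1*s2*B)^2 = A^2 + A*(s1*s2*B) + B^2" by (simp only: yb)
    ultimately have "int t = 2*(A^2 + A*(s1*s2*B) + (s1*s2*B)^2)" by simp
    then show False using T_excl[OF tT] by blast
  qed
qed



theorem theorem7:
  fixes t :: nat
  assumes "t \<in> T" and "t \<ge> 10 ^ 6" and "P t = 1"
  shows "C 3 t > 5"
proof -
  note tT = assms(1) and big = assms(2)
  have t4: "t mod 4 = 2" using tT unfolding T_def by blast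
  have "card {(a::nat, b::nat, c::nat). a \<le> b \<and> b \<le> c \<and> a^2 + b^2 + c^2 = t} = 1"
    using assms(3) unfolding P_def .
  then obtain w where w: "{(a::nat, b::nat, c::nat). a \<le> b \<and> b \<le> c \<and> a^2 + b^2 + c^2 = t} = {w}"
    by (rule card_1_singletonE)
  obtain a b c where wabc: "w = (a,b,c)" by (cases w) auto
  have S: "{(a'::nat, b'::nat, c'::nat). a' \<le> b' \<and> b' \<le> c' \<and> a'^2 + b'^2 + c'^2 = t} = {(a,b,c)}"
    using w wabc by simp
  have "(a,b,c) \<in> {(a'::nat, b'::nat, c'::nat). a' \<le> b' \<and> b' \<le> c' \<and> a'^2 + b'^2 + c'^2 = t}"
    using S by simp
  then have abc: "a^2+b^2+c^2 = t" by simp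
  define A where "A = int a"
  define B where "B = int b"
  define Cc where "Cc = int c"
  have nt: "A^2+B^2+Cc^2 = int t" unfolding A_def B_def Cc_def using abc by (metis of_nat_add of_nat_power)
  have SP: "(\<bar>x\<bar>,\<bar>y\<bar>,\<bar>z\<bar>) \<in> {(A,B,Cc),(A,Cc,B),(B,A,Cc),(B,Cc,A),(Cc,A,B),(Cc,B,A)}"
    if "x^2+y^2+z^2 = int t" for x y z :: int
    using sperm_of_P1[OF S that] unfolding A_def B_def Cc_def .
  have H: "\<bar>x\<bar> \<in> {A,B,Cc} \<and> \<bar>y\<bar> \<in> {A,B,Cc} \<and> \<bar>z\<bar> \<in> {A,B,Cc}"
    if "x^2+y^2+z^2 = A^2+B^2+Cc^2" for x y z :: int
    using SP[of x y z] that nt by auto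
  have tpos: "t > 0" using tT unfolding T_def by blast
  have nz: "A^2+B^2+Cc^2 > 0" using nt tpos by simp
  define g where "g = gcd A (gcd B Cc)"
  have g1: "\<bar>g\<bar> = 1"
  proof (rule ccontr)
    assume "\<bar>g\<bar> \<noteq> 1"
    then obtain p where p: "prime p" "p dvd g" using prime_factor_int by blast
    have "g dvd gcd B Cc" unfolding g_def by (rule gcd_dvd2)
    moreover have "gcd B Cc dvd B" "gcd B Cc dvd Cc" by simp_all
    ultimately have "g dvd B" "g dvd Cc" using dvd_trans by blast+
    moreover have "g dvd A" unfolding g_def by simp
    ultimately have pd: "p dvd A" "p dvd B" "p dvd Cc" using p(2) dvd_trans by blast+
    show False
    proof (cases "odd p")
      case True
      show False using no_odd_common_prime[OF H p(1) True pd nz] by blast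
    next
      case False
      then have "2 dvd A" "2 dvd B" "2 dvd Cc" using pd dvd_trans by blast+
      then obtain a' b' c' where "A = 2*a'" "B = 2*b'" "Cc = 2*c'" by blast
      then have "int t = 4*(a'^2+b'^2+c'^2)" using nt by (simp add: power2_eq_square algebra_simps)
      then have "int t mod 4 = 0" by simp
      moreover have "int t mod 4 = 2" using t4 by presburger
      ultimately show False by simp
    qed
  qed
  obtain al be ga where bz0: "al*A + be*B + ga*Cc = g" using bezout3 unfolding g_def by blast
  have gpos: "g \<ge> 0" unfolding g_def by simp
  then have "g = 1" using g1 by simp
  then have bz: "al*A + be*B + ga*Cc = 1" using bz0 by simp
  have ev: "even t" using t4 by presburger
  have ex: "\<exists>n. odd n \<and> zero_sum_config 3 t n" using odd_config_exists[OF nt ev bz] .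
  then have Cdef: "C 3 t = (LEAST n. odd n \<and> zero_sum_config 3 t n)" unfolding C_def by simp
  define n0 where "n0 = (LEAST n. odd n \<and> zero_sum_config 3 t n)"
  have n0: "odd n0 \<and> zero_sum_config 3 t n0" unfolding n0_def using LeastI_ex[OF ex] .
  have "\<not> n0 \<le> 5"
  proof
    assume "n0 \<le> 5"
    then show False using no_small_config[OF SP tT big nt bz] n0 by blast
  qed
  then show ?thesis using Cdef n0_def by simp
qed


end
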